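(* Consider a region discretized by the FDTD-Q scheme described in the context, with $0<\Delta t<\Delta t_{\mathrm{CFL,gen}}=2/\rho\!\left(\frac{1}{\hbar}(D_V'')^{-1/2}H(D_V'')^{-1/2}\right)$ ($\rho$ the spectral radius), and assume that the total probability is bounded above by a finite value $\mathcal{P}_{\max}$: $\mathcal{P}^n\le\mathcal{P}_{\max}$ for $n=0,1,\dots,n_t$. Then $$\mathcal{H}^n\ge\Delta x\Delta y\Delta z\,\frac{\mathcal{P}_{\max}}{\lambda_{\min}(\mathbf{P})}\left(\min\Big(\min_{i,j,k}U_{i,j,k},\,0\Big)-\frac{4\hbar}{\Delta t}\right),\qquad n=1,2,\dots,n_t-1,$$ where $\lambda_{\min}$ denotes the smallest eigenvalue, and $$\frac{\mathcal{H}^{n+1}-\mathcal{H}^n}{\Delta t}=s^{n+\frac12},\qquad n=1,2,\dots,n_t-2.$$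
   Context: Fix constants $\hbar>0$, $m>0$, cell sizes $\Delta x,\Delta y,\Delta z>0$, positive integers $n_x,n_y,n_z,n_t$ and a time step $\Delta t>0$. The region is a box made of $n_x\times n_y\times n_z$ primary cells of size $\Delta x\times\Delta y\times\Delta z$, with primary nodes $(i,j,k)$, $1\le i\le n_x+1$, $1\le j\le n_y+1$, $1\le k\le n_z+1$. Let $N=(n_x+1)(n_y+1)(n_z+1)$; vectors indexed by nodes use the ordering $i+(j-1)(n_x+1)+(k-1)(n_x+1)(n_y+1)$. Real potential values $U_{i,j,k}$ are given at the nodes; $D_U$ is the $N\times N$ diagonal matrix containing them. Let $I_p$ be the $p\times p$ identity, $\tilde I_p=\mathrm{diag}(\tfrac12,1,\dots,1,\tfrac12)$ ($p\times p$), $W_p=[0_{p\times1}\ I_p]-[I_p\ 0_{p\times 1}]$ ($p\times(p+1)$), $\otimes$ the Kronecker product, and $e\{p,q\}$ the $q\times 1$ vector with $1$ in position $p$ and zeros elsewhere. Define $D_V''=\Delta x\Delta y\Delta z\,\tilde I_{n_z+1}\otimes\tilde I_{n_y+1}\otimes\tilde I_{n_x+1}$; $D=[D_x\ D_y\ D_z]$ with $D_x=-I_{n_z+1}\otimes I_{n_y+1}\otimes W_{n_x}^T$, $D_y=-I_{n_z+1}\otimes W_{n_y}^T\otimes I_{n_x+1}$, $D_z=-W_{n_z}^T\otimes I_{n_y+1}\otimes I_{n_x+1}$; $D_S''=\mathrm{diag}(\Delta y\Delta z\,\tilde I_{n_z+1}\otimes\tilde I_{n_y+1}\otimes I_{n_x},\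 \Delta x\Delta z\,\tilde I_{n_z+1}\otimes I_{n_y}\otimes\tilde I_{n_x+1},\ \Delta x\Delta y\,I_{n_z}\otimes\tilde I_{n_y+1}\otimes\tilde I_{n_x+1})$; $D_l'=\mathrm{diag}(\Delta x\, I_{n_x(n_y+1)(n_z+1)},\ \Delta y\, I_{(n_x+1)n_y(n_z+1)},\ \Delta z\, I_{(n_x+1)(n_y+1)n_z})$; $H=\frac{\hbar^2}{2m}D D_S''(D_l')^{-1}D^T+D_V''D_U$; $\mathbf{P}=\begin{bmatrix}D_V''&-\frac{\Delta t}{2\hbar}H\\-\frac{\Delta t}{2\hbar}H&D_V''\end{bmatrix}$. Boundary ("hanging") variables: $L=[L_W\ L_E\ L_S\ L_N\ L_B\ L_T]$ with $L_W=I_{n_z+1}\otimes I_{n_y+1}\otimes e\{1,n_x+1\}$, $L_E=I_{n_z+1}\otimes I_{n_y+1}\otimes e\{n_x+1,n_x+1\}$, $L_S=I_{n_z+1}\otimes e\{1,n_y+1\}\otimes I_{n_x+1}$, $L_N=I_{n_z+1}\otimes e\{n_y+1,n_y+1\}\otimes I_{n_x+1}$, $L_B=e\{1,n_z+1\}\otimes I_{n_y+1}\otimes I_{n_x+1}$, $L_T=e\{n_z+1,n_z+1\}\otimes I_{n_y+1}\otimes I_{n_x+1}$; let $M$ be the number of columns of $L$. $D_{\hat n}=\mathrm{diag}(-I_{(n_y+1)(n_z+1)},I_{(n_y+1)(n_z+1)},-I_{(n_x+1)(n_z+1)},I_{(n_x+1)(n_z+1)},-I_{(n_x+1)(n_y+1)},I_{(n_x+1)(n_y+1)})$;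 $D_{S,b}''=\mathrm{diag}(\Delta y\Delta z\,\tilde I_{n_z+1}\otimes\tilde I_{n_y+1},\ \Delta y\Delta z\,\tilde I_{n_z+1}\otimes\tilde I_{n_y+1},\ \Delta x\Delta z\,\tilde I_{n_z+1}\otimes\tilde I_{n_x+1},\ \Delta x\Delta z\,\tilde I_{n_z+1}\otimes\tilde I_{n_x+1},\ \Delta x\Delta y\,\tilde I_{n_y+1}\otimes\tilde I_{n_x+1},\ \Delta x\Delta y\,\tilde I_{n_y+1}\otimes\tilde I_{n_x+1})$; $H_\perp=\frac{\hbar^2}{2m}L D_{\hat n}D_{S,b}''$. FDTD-Q scheme: real vectors $\psi_R^n\in\mathbb{R}^N$ and $\psi_I^{n-\frac12}\in\mathbb{R}^N$ ($n=0,\dots,n_t$), and arbitrary boundary vectors $g_R^n\in\mathbb{R}^M$, $g_I^{n+\frac12}\in\mathbb{R}^M$ ($n=0,\dots,n_t-1$), satisfying for $n=0,\dots,n_t-1$: $\hbar D_V''\frac{\psi_R^{n+1}-\psi_R^n}{\Delta t}=H\psi_I^{n+\frac12}-H_\perp g_I^{n+\frac12}$ and $\hbar D_V''\frac{\psi_I^{n+\frac12}-\psi_I^{n-\frac12}}{\Delta t}=-H\psi_R^n+H_\perp g_R^n$. Let $\psi^n=\begin{bmatrix}\psi_R^n\\ \psi_I^{n-\frac12}\end{bmatrix}$. Total probability: $\mathcal{P}^n=(\psi^n)^T\mathbf{P}\psi^n$, $n=0,\dots,n_t$. Total energy, for $n=1,\dots,n_t-1$: $\mathcal{H}^n=(\psi_R^n)^TH\psi_R^n+(\psi_I^{n-\frac12})^TH\psi_I^{n-\frac12}+\Delta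 t\left(\frac{\psi_R^n-\psi_R^{n-1}}{\Delta t}\right)^T(\hbar D_V'')\frac{\psi_I^{n+\frac12}-\psi_I^{n-\frac12}}{\Delta t}$. Supplied power, for $n=1,\dots,n_t-2$: $s^{n+\frac12}=2\left(\frac{\psi_R^{n+1}-\psi_R^n}{\Delta t}\right)^TH_\perp\frac{g_R^{n+1}+g_R^n}{2}+2\left(\frac{\psi_I^{n+\frac12}-\psi_I^{n-\frac12}}{\Delta t}\right)^TH_\perp\frac{g_I^{n+\frac12}+g_I^{n-\frac12}}{2}$. *)

theory Defs
  imports "Jordan_Normal_Form.Spectral_Radius"
begin

definition kron :: "real mat \<Rightarrow> real mat \<Rightarrow> real mat" where
  "kron A B = mat (dim_row A * dim_row B) (dim_col A * dim_col B)
     (\<lambda>(i,j). A $$ (i div dim_row B, j div dim_col B) * B $$ (i mod dim_row B, j mod dim_col B))"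

definition hcat :: "real mat \<Rightarrow> real mat \<Rightarrow> real mat" where
  "hcat A B = mat (dim_row A) (dim_col A + dim_col B)
     (\<lambda>(i,j). if j < dim_col A then A $$ (i,j) else B $$ (i, j - dim_col A))"

definition bdiag :: "real mat \<Rightarrow> real mat \<Rightarrow> real mat" where
  "bdiag A B = mat (dim_row A + dim_row B) (dim_col A + dim_col B)
     (\<lambda>(i,j). if i < dim_row A \<and> j < dim_col A then A $$ (i,j)
             else if dim_row A \<le> i \<and> dim_col A \<le> j then B $$ (i - dim_row A, j - dim_col A)
             else 0)"

definition Itil :: "nat \<Rightarrow> real mat" where
  "Itil p = mat p p (\<lambda>(i,j). if i = j then (if i = 0 \<or> i = p - 1 then 1/2 else 1) else 0)"

text \<open>\<open>W_p = [0 I_p] - [I_p 0]\<close>, a p x (p+1) matrix\<close>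
definition Wm :: "nat \<Rightarrow> real mat" where
  "Wm p = mat p (p+1) (\<lambda>(i,j). (if j = i + 1 then 1 else 0) - (if j = i then 1 else 0))"

text \<open>\<open>e{p,q}\<close>: q x 1 column with 1 in (1-based) position p\<close>
definition evec :: "nat \<Rightarrow> nat \<Rightarrow> real mat" where
  "evec p q = mat q 1 (\<lambda>(i,j). if i = p - 1 then 1 else 0)"

definition Im :: "nat \<Rightarrow> real mat" where "Im p = 1\<^sub>m p"

definition diag_inv_sqrt :: "real mat \<Rightarrow> real mat" where
  "diag_inv_sqrt D = mat (dim_row D) (dim_col D) (\<lambda>(i,j). if i = j then 1 / sqrt (D $$ (i,i)) else 0)"

definition lambda_min :: "real mat \<Rightarrow> real" where
  "lambda_min A = Min {l. eigenvalue A l}"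

definition Nn :: "nat \<Rightarrow> nat \<Rightarrow> nat \<Rightarrow> nat" where
  "Nn nx ny nz = (nx+1)*(ny+1)*(nz+1)"

definition DV :: "real \<Rightarrow> real \<Rightarrow> real \<Rightarrow> nat \<Rightarrow> nat \<Rightarrow> nat \<Rightarrow> real mat" where
  "DV dx dy dz nx ny nz = (dx*dy*dz) \<cdot>\<^sub>m kron (Itil (nz+1)) (kron (Itil (ny+1)) (Itil (nx+1)))"

text \<open>\<open>D_U\<close>: diagonal with \<open>U_{i,j,k}\<close> (1-based node indices) at position
  \<open>i+(j-1)(nx+1)+(k-1)(nx+1)(ny+1)\<close> (1-based)\<close>
definition DU :: "(nat \<Rightarrow> nat \<Rightarrow> nat \<Rightarrow> real) \<Rightarrow> nat \<Rightarrow> nat \<Rightarrow> nat \<Rightarrow> real mat" where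
  "DU U nx ny nz = mat (Nn nx ny nz) (Nn nx ny nz) (\<lambda>(a,b). if a = b then
      U (a mod (nx+1) + 1) (a div (nx+1) mod (ny+1) + 1) (a div ((nx+1)*(ny+1)) + 1) else 0)"

definition Dx :: "nat \<Rightarrow> nat \<Rightarrow> nat \<Rightarrow> real mat" where
  "Dx nx ny nz = - kron (Im (nz+1)) (kron (Im (ny+1)) (transpose_mat (Wm nx)))"
definition Dy :: "nat \<Rightarrow> nat \<Rightarrow> nat \<Rightarrow> real mat" where
  "Dy nx ny nz = - kron (Im (nz+1)) (kron (transpose_mat (Wm ny)) (Im (nx+1)))"
definition Dz :: "nat \<Rightarrow> nat \<Rightarrow> nat \<Rightarrow> real mat" where
  "Dz nx ny nz = - kron (transpose_mat (Wm nz)) (kron (Im (ny+1)) (Im (nx+1)))"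

definition Dmat :: "nat \<Rightarrow> nat \<Rightarrow> nat \<Rightarrow> real mat" where
  "Dmat nx ny nz = hcat (Dx nx ny nz) (hcat (Dy nx ny nz) (Dz nx ny nz))"

definition DS :: "real \<Rightarrow> real \<Rightarrow> real \<Rightarrow> nat \<Rightarrow> nat \<Rightarrow> nat \<Rightarrow> real mat" where
  "DS dx dy dz nx ny nz = bdiag ((dy*dz) \<cdot>\<^sub>m kron (Itil (nz+1)) (kron (Itil (ny+1)) (Im nx)))
     (bdiag ((dx*dz) \<cdot>\<^sub>m kron (Itil (nz+1)) (kron (Im ny) (Itil (nx+1))))
            ((dx*dy) \<cdot>\<^sub>m kron (Im nz) (kron (Itil (ny+1)) (Itil (nx+1)))))"

definition Dl :: "real \<Rightarrow> real \<Rightarrow> real \<Rightarrow> nat \<Rightarrow> nat \<Rightarrow> nat \<Rightarrow> real mat" where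
  "Dl dx dy dz nx ny nz = bdiag (dx \<cdot>\<^sub>m Im (nx*(ny+1)*(nz+1)))
     (bdiag (dy \<cdot>\<^sub>m Im ((nx+1)*ny*(nz+1))) (dz \<cdot>\<^sub>m Im ((nx+1)*(ny+1)*nz)))"

definition Dl_inv :: "real \<Rightarrow> real \<Rightarrow> real \<Rightarrow> nat \<Rightarrow> nat \<Rightarrow> nat \<Rightarrow> real mat" where
  "Dl_inv dx dy dz nx ny nz = bdiag ((1/dx) \<cdot>\<^sub>m Im (nx*(ny+1)*(nz+1)))
     (bdiag ((1/dy) \<cdot>\<^sub>m Im ((nx+1)*ny*(nz+1))) ((1/dz) \<cdot>\<^sub>m Im ((nx+1)*(ny+1)*nz)))"

definition Hmat :: "real \<Rightarrow> real \<Rightarrow> real \<Rightarrow> real \<Rightarrow> real \<Rightarrow> nat \<Rightarrow> nat \<Rightarrow> nat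
                    \<Rightarrow> (nat \<Rightarrow> nat \<Rightarrow> nat \<Rightarrow> real) \<Rightarrow> real mat" where
  "Hmat hbar m dx dy dz nx ny nz U =
     (hbar^2 / (2*m)) \<cdot>\<^sub>m (Dmat nx ny nz * DS dx dy dz nx ny nz * Dl_inv dx dy dz nx ny nz
                            * transpose_mat (Dmat nx ny nz))
     + DV dx dy dz nx ny nz * DU U nx ny nz"

definition Pmat :: "real \<Rightarrow> real \<Rightarrow> real \<Rightarrow> real \<Rightarrow> real \<Rightarrow> real \<Rightarrow> nat \<Rightarrow> nat \<Rightarrow> nat
                    \<Rightarrow> (nat \<Rightarrow> nat \<Rightarrow> nat \<Rightarrow> real) \<Rightarrow> real mat" where
  "Pmat hbar m dt dx dy dz nx ny nz U =
     (let V = DV dx dy dz nx ny nz; K = (- dt / (2*hbar)) \<cdot>\<^sub>m Hmat hbar m dx dy dz nx ny nz U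
      in four_block_mat V K K V)"

definition dt_CFL :: "real \<Rightarrow> real \<Rightarrow> real \<Rightarrow> real \<Rightarrow> real \<Rightarrow> nat \<Rightarrow> nat \<Rightarrow> nat
                    \<Rightarrow> (nat \<Rightarrow> nat \<Rightarrow> nat \<Rightarrow> real) \<Rightarrow> real" where
  "dt_CFL hbar m dx dy dz nx ny nz U =
     (let S = diag_inv_sqrt (DV dx dy dz nx ny nz)
      in 2 / spectral_radius (map_mat complex_of_real
                ((1/hbar) \<cdot>\<^sub>m (S * Hmat hbar m dx dy dz nx ny nz U * S))))"

definition Lmat :: "nat \<Rightarrow> nat \<Rightarrow> nat \<Rightarrow> real mat" where
  "Lmat nx ny nz =
     hcat (kron (Im (nz+1)) (kron (Im (ny+1)) (evec 1 (nx+1))))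
    (hcat (kron (Im (nz+1)) (kron (Im (ny+1)) (evec (nx+1) (nx+1))))
    (hcat (kron (Im (nz+1)) (kron (evec 1 (ny+1)) (Im (nx+1))))
    (hcat (kron (Im (nz+1)) (kron (evec (ny+1) (ny+1)) (Im (nx+1))))
    (hcat (kron (evec 1 (nz+1)) (kron (Im (ny+1)) (Im (nx+1))))
          (kron (evec (nz+1) (nz+1)) (kron (Im (ny+1)) (Im (nx+1))))))))"

definition Mm :: "nat \<Rightarrow> nat \<Rightarrow> nat \<Rightarrow> nat" where
  "Mm nx ny nz = dim_col (Lmat nx ny nz)"

definition Dnhat :: "nat \<Rightarrow> nat \<Rightarrow> nat \<Rightarrow> real mat" where
  "Dnhat nx ny nz =
     bdiag (- Im ((ny+1)*(nz+1))) (bdiag (Im ((ny+1)*(nz+1)))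
    (bdiag (- Im ((nx+1)*(nz+1))) (bdiag (Im ((nx+1)*(nz+1)))
    (bdiag (- Im ((nx+1)*(ny+1))) (Im ((nx+1)*(ny+1)))))))"

definition DSb :: "real \<Rightarrow> real \<Rightarrow> real \<Rightarrow> nat \<Rightarrow> nat \<Rightarrow> nat \<Rightarrow> real mat" where
  "DSb dx dy dz nx ny nz =
     bdiag ((dy*dz) \<cdot>\<^sub>m kron (Itil (nz+1)) (Itil (ny+1)))
    (bdiag ((dy*dz) \<cdot>\<^sub>m kron (Itil (nz+1)) (Itil (ny+1)))
    (bdiag ((dx*dz) \<cdot>\<^sub>m kron (Itil (nz+1)) (Itil (nx+1)))
    (bdiag ((dx*dz) \<cdot>\<^sub>m kron (Itil (nz+1)) (Itil (nx+1)))
    (bdiag ((dx*dy) \<cdot>\<^sub>m kron (Itil (ny+1)) (Itil (nx+1)))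
           ((dx*dy) \<cdot>\<^sub>m kron (Itil (ny+1)) (Itil (nx+1)))))))"

definition Hperp :: "real \<Rightarrow> real \<Rightarrow> real \<Rightarrow> real \<Rightarrow> real \<Rightarrow> nat \<Rightarrow> nat \<Rightarrow> nat \<Rightarrow> real mat" where
  "Hperp hbar m dx dy dz nx ny nz =
     (hbar^2 / (2*m)) \<cdot>\<^sub>m (Lmat nx ny nz * Dnhat nx ny nz * DSb dx dy dz nx ny nz)"

text \<open>\<open>psiR n = \<psi>_R^n\<close>, \<open>psiI n = \<psi>_I^{n-1/2}\<close>, \<open>gR n = g_R^n\<close>, \<open>gI n = g_I^{n+1/2}\<close>.\<close>
definition fdtdq_scheme where
  "fdtdq_scheme hbar m dt dx dy dz nx ny nz nt U psiR psiI gR gI \<longleftrightarrow>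
     (let N = Nn nx ny nz; M = Mm nx ny nz; H = Hmat hbar m dx dy dz nx ny nz U;
          V = DV dx dy dz nx ny nz; Hp = Hperp hbar m dx dy dz nx ny nz in
      (\<forall>n\<le>nt. psiR n \<in> carrier_vec N \<and> psiI n \<in> carrier_vec N) \<and>
      (\<forall>n<nt. gR n \<in> carrier_vec M \<and> gI n \<in> carrier_vec M) \<and>
      (\<forall>n<nt.
         hbar \<cdot>\<^sub>m V *\<^sub>v ((1/dt) \<cdot>\<^sub>v (psiR (Suc n) - psiR n)) = H *\<^sub>v psiI (Suc n) - Hp *\<^sub>v gI n \<and>
         hbar \<cdot>\<^sub>m V *\<^sub>v ((1/dt) \<cdot>\<^sub>v (psiI (Suc n) - psiI n)) = - (H *\<^sub>v psiR n) + Hp *\<^sub>v gR n))"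

definition total_prob where
  "total_prob hbar m dt dx dy dz nx ny nz U psiR psiI n =
     (let psi = psiR n @\<^sub>v psiI n in psi \<bullet> (Pmat hbar m dt dx dy dz nx ny nz U *\<^sub>v psi))"

definition total_energy where
  "total_energy hbar m dt dx dy dz nx ny nz U psiR psiI n =
     (let H = Hmat hbar m dx dy dz nx ny nz U in
      psiR n \<bullet> (H *\<^sub>v psiR n) + psiI n \<bullet> (H *\<^sub>v psiI n)
      + dt * (((1/dt) \<cdot>\<^sub>v (psiR n - psiR (n-1))) \<bullet>
              ((hbar \<cdot>\<^sub>m DV dx dy dz nx ny nz) *\<^sub>v ((1/dt) \<cdot>\<^sub>v (psiI (Suc n) - psiI n)))))"

text \<open>\<open>supplied_power ... n = s^{n+1/2}\<close>\<close>
definition supplied_power where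
  "supplied_power hbar m dt dx dy dz nx ny nz psiR psiI gR gI n =
     (let Hp = Hperp hbar m dx dy dz nx ny nz in
      2 * (((1/dt) \<cdot>\<^sub>v (psiR (Suc n) - psiR n)) \<bullet> (Hp *\<^sub>v ((1/2) \<cdot>\<^sub>v (gR (Suc n) + gR n))))
    + 2 * (((1/dt) \<cdot>\<^sub>v (psiI (Suc n) - psiI n)) \<bullet> (Hp *\<^sub>v ((1/2) \<cdot>\<^sub>v (gI n + gI (n-1))))))"

end

theory Submission imports Defs "HOL-Analysis.Function_Topology" begin


definition qf :: "real mat \<Rightarrow> nat \<Rightarrow> (nat \<Rightarrow> real) \<Rightarrow> real" where
  "qf A n f = (\<Sum>i<n. \<Sum>j<n. f i * A $$ (i,j) * f j)"

definition sph :: "nat \<Rightarrow> (nat \<Rightarrow> real) set" where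
  "sph n = Pi UNIV (\<lambda>i. if i < n then {-1..1} else {0}) \<inter> {f. (\<Sum>i<n. (f i)^2) = 1}"

lemma cont_qf: "continuous_on UNIV (qf A n)"
  unfolding qf_def
  by (intro continuous_intros continuous_on_product_coordinates)

lemma cont_nsq: "continuous_on UNIV (\<lambda>f::nat\<Rightarrow>real. \<Sum>i<n. (f i)^2)"
  by (intro continuous_intros continuous_on_product_coordinates)

lemma compact_sph: "compact (sph n)"
proof -
  have "compact (Pi\<^sub>E UNIV (\<lambda>i::nat. if i < n then {-1..1::real} else {0}))"
    using compactin_PiE[of "\<lambda>_. euclidean" UNIV "(\<lambda>i::nat. if i < n then {-1..1::real} else {0})"]
    by (simp add: euclidean_product_topology compactin_euclidean_iff)
  moreover have "closed {f::nat\<Rightarrow>real. (\<Sum>i<n. (f i)^2) = 1}"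
    by (rule closed_Collect_eq[OF cont_nsq continuous_on_const])
  ultimately show ?thesis unfolding sph_def
    by (simp add: PiE_UNIV_domain compact_Int_closed)
qed


lemma quad_nonneg_lin0:
  fixes a c :: real
  assumes "\<And>t. 0 \<le> 2*t*a + t^2*c" and "c \<ge> 0"
  shows "a = 0"
proof (rule ccontr)
  assume a: "a \<noteq> 0"
  define t where "t = - a / (c+1)"
  have c1: "c + 1 > 0" using assms(2) by simp
  have tc: "t*(c+1) = -a" using c1 by (simp add: t_def)
  have "(c+1)^2 * (2*t*a + t^2*c) = 2*a*(t*(c+1))*(c+1) + (t*(c+1))^2*c"
    by (simp add: algebra_simps power2_eq_square)
  also have "\<dots> = - (a^2 * (c+2))" unfolding tc by (simp add: algebra_simps power2_eq_square)
  also have "\<dots> < 0" using a assms(2) by (simp add: mult_pos_pos)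
  finally have neg: "(c+1)^2 * (2*t*a + t^2*c) < 0" .
  have "0 \<le> 2*t*a + t^2*c" by (rule assms(1))
  hence "0 \<le> (c+1)^2 * (2*t*a + t^2*c)" by simp
  thus False using neg by simp
qed

lemma sp_self: "(x::real vec) \<in> carrier_vec n \<Longrightarrow> x \<bullet> x = (\<Sum>i<n. (x$i)^2)"
  by (auto simp: scalar_prod_def lessThan_atLeast0 power2_eq_square intro!: sum.cong)

lemma sp_self_eq0: assumes "x \<in> carrier_vec n" "x \<bullet> (x::real vec) = 0" shows "x = 0\<^sub>v n"
proof -
  have "(\<Sum>i<n. (x$i)^2) = 0" using assms sp_self by metis
  hence "\<forall>i\<in>{..<n}. (x$i)^2 = 0" by (subst (asm) sum_nonneg_eq_0_iff) auto
  thus ?thesis using assms(1) by (intro eq_vecI) auto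
qed

lemma sp_qf: assumes "x \<in> carrier_vec n" "A \<in> carrier_mat n n"
  shows "x \<bullet> (A *\<^sub>v x) = qf A n (\<lambda>i. x$i)"
  using assms by (simp add: qf_def scalar_prod_def mult_mat_vec_def row_def lessThan_atLeast0
      sum_distrib_left mult.assoc mult.commute mult.left_commute)

lemma sym_sp: assumes A: "A \<in> carrier_mat n n" and sym: "transpose_mat A = A"
  and x: "x \<in> carrier_vec n" and y: "y \<in> carrier_vec n"
  shows "x \<bullet> ((A::real mat) *\<^sub>v y) = y \<bullet> (A *\<^sub>v x)"
proof -
  have "y \<bullet> (A *\<^sub>v x) = (transpose_mat A *\<^sub>v y) \<bullet> x"
    by (rule transpose_vec_mult_scalar[OF A x y, symmetric])
  also have "\<dots> = x \<bullet> (A *\<^sub>v y)" using sym A x y by (simp add: comm_scalar_prod[of _ n])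
  finally show ?thesis by simp
qed

lemma rayleigh:
  fixes A :: "real mat"
  assumes A: "A \<in> carrier_mat n n" and n: "n > 0" and sym: "transpose_mat A = A"
  shows "\<exists>l. eigenvalue A l \<and> (\<forall>x\<in>carrier_vec n. l * (x \<bullet> x) \<le> x \<bullet> (A *\<^sub>v x))"
proof -
  have ne: "(\<lambda>i. if i = 0 then 1 else 0) \<in> sph n"
  proof -
    have e: "(if b then 1 else 0::real)^2 = (if b then 1 else 0)" for b by simp
    show ?thesis using n by (auto simp: sph_def e sum.delta)
  qed
  obtain f0 where f0: "f0 \<in> sph n" and min: "\<And>f. f \<in> sph n \<Longrightarrow> qf A n f0 \<le> qf A n f"
    using continuous_attains_inf[OF compact_sph _ continuous_on_subset[OF cont_qf subset_UNIV], of n A] ne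
    by blast
  define l where "l = qf A n f0"
  define v where "v = vec n f0"
  have v: "v \<in> carrier_vec n" by (simp add: v_def)
  have vv: "v \<bullet> v = 1" using f0 unfolding sp_self[OF v] by (simp add: v_def sph_def)
  have vAv: "v \<bullet> (A *\<^sub>v v) = l" using sp_qf[OF v A] by (simp add: l_def v_def qf_def)
  have Q: "l * (x \<bullet> x) \<le> x \<bullet> (A *\<^sub>v x)" if x: "x \<in> carrier_vec n" for x
  proof (cases "x = 0\<^sub>v n")
    case True thus ?thesis using A by simp
  next
    case False
    define s where "s = x \<bullet> x"
    have s0: "s \<ge> 0" unfolding s_def sp_self[OF x] by (auto intro: sum_nonneg)
    have "s \<noteq> 0" using sp_self_eq0[OF x] False s_def by auto
    hence s: "s > 0" using s0 by simp
    define c where "c = sqrt s"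
    have c: "c > 0" "c^2 = s" using s by (auto simp: c_def)
    define f where "f = (\<lambda>i. if i < n then x$i / c else 0)"
    have "f \<in> sph n"
    proof -
      have "\<bar>x$i\<bar> \<le> c" if "i < n" for i
      proof -
        have "(x$i)^2 \<le> (\<Sum>j<n. (x$j)^2)"
          using that by (intro member_le_sum) auto
        hence "(x$i)^2 \<le> c^2" using c sp_self[OF x] s_def by simp
        thus ?thesis using c by (metis power2_abs power2_le_imp_le less_imp_le)
      qed
      hence "-c \<le> x$i \<and> x$i \<le> c" if "i < n" for i using that by force
      hence box: "f \<in> Pi UNIV (\<lambda>i. if i < n then {-1..1} else {0})"
        using c by (auto simp: f_def divide_le_eq le_divide_eq)
      have "(\<Sum>i<n. (f i)^2) = (\<Sum>i<n. (x$i)^2) / c^2"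
        by (simp add: f_def power_divide sum_divide_distrib)
      also have "\<dots> = 1" using c s sp_self[OF x] s_def by simp
      finally show ?thesis using box by (simp add: sph_def)
    qed
    hence "l \<le> qf A n f" using min l_def by simp
    also have "qf A n f = qf A n (\<lambda>i. x$i) / c^2"
      by (simp add: qf_def f_def sum_divide_distrib power2_eq_square)
    also have "\<dots> = qf A n (\<lambda>i. x$i) / s" using c by simp
    finally have "l \<le> qf A n (\<lambda>i. x$i) / s" .
    hence "l * s \<le> qf A n (\<lambda>i. x$i)" using s by (simp add: le_divide_eq)
    thus ?thesis using s_def sp_qf[OF x A] by simp
  qed
  define w where "w = A *\<^sub>v v - l \<cdot>\<^sub>v v"
  have w: "w \<in> carrier_vec n" using A v by (simp add: w_def)
  have lin: "y \<bullet> (A *\<^sub>v v) - l * (y \<bullet> v) = 0" if y: "y \<in> carrier_vec n" for y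
  proof (rule quad_nonneg_lin0)
    show "0 \<le> y \<bullet> (A *\<^sub>v y) - l * (y \<bullet> y)" using Q[OF y] by simp
    fix t
    define z where "z = v + t \<cdot>\<^sub>v y"
    have z: "z \<in> carrier_vec n" using v y by (simp add: z_def)
    have "0 \<le> z \<bullet> (A *\<^sub>v z) - l * (z \<bullet> z)" using Q[OF z] by simp
    also have "z \<bullet> (A *\<^sub>v z) = v \<bullet> (A *\<^sub>v v) + t * (v \<bullet> (A *\<^sub>v y)) + t * (y \<bullet> (A *\<^sub>v v)) + t^2 * (y \<bullet> (A *\<^sub>v y))"
      using A v y unfolding z_def
      by (simp add: mult_add_distrib_mat_vec[OF A] mult_mat_vec[OF A] add_scalar_prod_distrib[of _ n]
           scalar_prod_add_distrib[of _ n] power2_eq_square algebra_simps)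
    also have "z \<bullet> z = v \<bullet> v + t * (v \<bullet> y) + t * (y \<bullet> v) + t^2 * (y \<bullet> y)"
      using v y unfolding z_def
      by (simp add: add_scalar_prod_distrib[of _ n] scalar_prod_add_distrib[of _ n] power2_eq_square algebra_simps)
    also have "v \<bullet> (A *\<^sub>v y) = y \<bullet> (A *\<^sub>v v)" by (rule sym_sp[OF A sym v y])
    also have "v \<bullet> y = y \<bullet> v" by (rule comm_scalar_prod[OF v y])
    finally show "0 \<le> 2 * t * (y \<bullet> (A *\<^sub>v v) - l * (y \<bullet> v)) + t\<^sup>2 * (y \<bullet> (A *\<^sub>v y) - l * (y \<bullet> y))"
      using vv vAv by (simp add: algebra_simps)
  qed
  have "w \<bullet> w = 0"
    using lin[OF w] A v w unfolding w_def
    by (simp add: scalar_prod_minus_distrib[of _ n] algebra_simps)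
  hence "w = 0\<^sub>v n" by (rule sp_self_eq0[OF w])
  hence w0: "w = 0\<^sub>v n" .
  have "A *\<^sub>v v = l \<cdot>\<^sub>v v"
  proof (rule eq_vecI)
    fix i assume "i < dim_vec (l \<cdot>\<^sub>v v)"
    hence i: "i < n" using v by simp
    have "w $ i = 0" using w0 i by simp
    thus "(A *\<^sub>v v) $ i = (l \<cdot>\<^sub>v v) $ i" using i A v by (simp add: w_def)
  qed (use A v in simp)
  moreover have "v \<noteq> 0\<^sub>v n" using vv v by auto
  ultimately have "eigenvalue A l" using v A unfolding eigenvalue_def eigenvector_def by auto
  thus ?thesis using Q by blast
qed



lemma sp_self_nonneg: "(x::real vec) \<in> carrier_vec n \<Longrightarrow> 0 \<le> x \<bullet> x"
  by (simp add: sp_self sum_nonneg)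

lemma sp_self_pos: "(x::real vec) \<in> carrier_vec n \<Longrightarrow> x \<noteq> 0\<^sub>v n \<Longrightarrow> 0 < x \<bullet> x"
  using sp_self_nonneg sp_self_eq0 by (metis less_eq_real_def)

lemma lambda_min_prop:
  fixes A :: "real mat"
  assumes A: "A \<in> carrier_mat n n" and n: "n > 0" and sym: "transpose_mat A = A"
  shows "eigenvalue A (lambda_min A)" "\<And>x. x \<in> carrier_vec n \<Longrightarrow> lambda_min A * (x \<bullet> x) \<le> x \<bullet> (A *\<^sub>v x)"
proof -
  obtain l where l: "eigenvalue A l" and Q: "\<And>x. x\<in>carrier_vec n \<Longrightarrow> l * (x \<bullet> x) \<le> x \<bullet> (A *\<^sub>v x)"
    using rayleigh[OF A n sym] by blast
  have fin: "finite {l. eigenvalue A l}" using card_finite_spectrum(1)[OF A] by (simp add: spectrum_def)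
  have low: "l \<le> l'" if ev: "eigenvalue A l'" for l'
  proof -
    obtain u where u: "eigenvector A u l'" using ev unfolding eigenvalue_def by blast
    hence uc: "u \<in> carrier_vec n" and u0: "u \<noteq> 0\<^sub>v n" and Au: "A *\<^sub>v u = l' \<cdot>\<^sub>v u"
      using A unfolding eigenvector_def by auto
    have "l * (u \<bullet> u) \<le> u \<bullet> (A *\<^sub>v u)" by (rule Q[OF uc])
    also have "\<dots> = l' * (u \<bullet> u)" using uc by (simp add: Au)
    finally show ?thesis using sp_self_pos[OF uc u0] by simp
  qed
  have "lambda_min A = l" unfolding lambda_min_def
    by (rule Min_eqI[OF fin]) (use low l in auto)
  thus "eigenvalue A (lambda_min A)" "\<And>x. x \<in> carrier_vec n \<Longrightarrow> lambda_min A * (x \<bullet> x) \<le> x \<bullet> (A *\<^sub>v x)"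
    using l Q by auto
qed

lemma sym_norm_bound:
  fixes K :: "real mat"
  assumes K: "K \<in> carrier_mat n n" and n: "n > 0" and sym: "transpose_mat K = K"
  shows "\<exists>e. eigenvalue K e \<and> (\<forall>x\<in>carrier_vec n. (K *\<^sub>v x) \<bullet> (K *\<^sub>v x) \<le> e^2 * (x \<bullet> x))"
proof -
  define C where "C = - (K * K)"
  have C: "C \<in> carrier_mat n n" using K by (simp add: C_def)
  have symC: "transpose_mat C = C" unfolding C_def transpose_uminus
    using transpose_mult[OF K K] sym by simp
  obtain l where l: "eigenvalue C l" and Q: "\<And>x. x\<in>carrier_vec n \<Longrightarrow> l * (x \<bullet> x) \<le> x \<bullet> (C *\<^sub>v x)"
    using rayleigh[OF C n symC] by blast
  have Cmv: "C *\<^sub>v x = - (K *\<^sub>v (K *\<^sub>v x))" if x: "x \<in> carrier_vec n" for x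
    using K x unfolding C_def by (subst uminus_mult_mat_vec) auto
  have Cx: "x \<bullet> (C *\<^sub>v x) = - ((K *\<^sub>v x) \<bullet> (K *\<^sub>v x))" if x: "x \<in> carrier_vec n" for x
  proof -
    have "x \<bullet> (C *\<^sub>v x) = - (x \<bullet> (K *\<^sub>v (K *\<^sub>v x)))" using K x Cmv[OF x]
      by simp
    also have "x \<bullet> (K *\<^sub>v (K *\<^sub>v x)) = (K *\<^sub>v x) \<bullet> (K *\<^sub>v x)"
      using sym_sp[OF K sym x mult_mat_vec_carrier[OF K x]] K by simp
    finally show ?thesis .
  qed
  obtain v where v: "eigenvector C v l" using l unfolding eigenvalue_def by blast
  hence vc: "v \<in> carrier_vec n" and v0: "v \<noteq> 0\<^sub>v n" and Cv: "C *\<^sub>v v = l \<cdot>\<^sub>v v"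
    using C unfolding eigenvector_def by auto
  define mu where "mu = - l"
  have "l * (v \<bullet> v) = v \<bullet> (C *\<^sub>v v)" using vc by (simp add: Cv)
  also have "\<dots> \<le> 0" using Cx[OF vc] sp_self_nonneg[OF mult_mat_vec_carrier[OF K vc]] by simp
  finally have mu0: "mu \<ge> 0" using sp_self_pos[OF vc v0] unfolding mu_def
    by (simp add: mult_le_0_iff)
  define s where "s = sqrt mu"
  have s2: "s^2 = mu" using mu0 by (simp add: s_def)
  have KKv: "K *\<^sub>v (K *\<^sub>v v) = mu \<cdot>\<^sub>v v"
  proof (rule eq_vecI)
    fix i assume "i < dim_vec (mu \<cdot>\<^sub>v v)"
    hence i: "i < n" using vc by simp
    have "(C *\<^sub>v v) $ i = (l \<cdot>\<^sub>v v) $ i" using Cv by simp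
    thus "(K *\<^sub>v (K *\<^sub>v v)) $ i = (mu \<cdot>\<^sub>v v) $ i" using i vc K Cmv[OF vc]
      by (simp add: mu_def)
  qed (use K vc in simp)
  have bound: "\<forall>x\<in>carrier_vec n. (K *\<^sub>v x) \<bullet> (K *\<^sub>v x) \<le> s^2 * (x \<bullet> x)"
    using Q Cx unfolding s2 mu_def by force
  define w where "w = K *\<^sub>v v + s \<cdot>\<^sub>v v"
  have wc: "w \<in> carrier_vec n" using K vc by (simp add: w_def)
  show ?thesis
  proof (cases "w = 0\<^sub>v n")
    case False
    have "K *\<^sub>v w = s \<cdot>\<^sub>v w"
    proof (rule eq_vecI)
      fix i assume "i < dim_vec (s \<cdot>\<^sub>v w)"
      hence i: "i < n" using wc by simp
      have "K *\<^sub>v w = K *\<^sub>v (K *\<^sub>v v) + s \<cdot>\<^sub>v (K *\<^sub>v v)"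
        unfolding w_def using K vc by (simp add: mult_add_distrib_mat_vec[OF K] mult_mat_vec[OF K])
      hence "(K *\<^sub>v w) $ i = mu * v $ i + s * (K *\<^sub>v v) $ i" using i K vc KKv by simp
      also have "\<dots> = s * (s * v$i + (K *\<^sub>v v) $ i)" using s2 by (simp add: power2_eq_square algebra_simps)
      finally show "(K *\<^sub>v w) $ i = (s \<cdot>\<^sub>v w) $ i" using i K vc by (simp add: w_def)
    qed (use K wc in simp)
    hence "eigenvalue K s" using False wc K unfolding eigenvalue_def eigenvector_def by auto
    thus ?thesis using bound by blast
  next
    case True
    have "K *\<^sub>v v = (-s) \<cdot>\<^sub>v v"
    proof (rule eq_vecI)
      fix i assume "i < dim_vec ((-s) \<cdot>\<^sub>v v)"
      hence i: "i < n" using vc by simp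
      have "w $ i = 0" using True i by simp
      thus "(K *\<^sub>v v) $ i = ((-s) \<cdot>\<^sub>v v) $ i" using i K vc by (simp add: w_def)
    qed (use K vc in simp)
    hence "eigenvalue K (-s)" using v0 vc K unfolding eigenvalue_def eigenvector_def by auto
    thus ?thesis using bound by (metis power2_minus)
  qed
qed

lemma eig_le_sr:
  fixes K :: "real mat"
  assumes K: "K \<in> carrier_mat n n" and n: "n > 0" and e: "eigenvalue K e"
  shows "\<bar>e\<bar> \<le> spectral_radius (map_mat complex_of_real K)"
proof -
  have "eigenvalue (map_mat complex_of_real K) (complex_of_real e)"
    by (rule of_real_hom.eigenvalue_hom[OF K e])
  hence "norm (complex_of_real e) \<in> norm ` spectrum (map_mat complex_of_real K)"
    unfolding spectrum_def by (intro image_eqI[of _ _ "complex_of_real e"]) auto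
  from spectral_radius_mem_max(2)[OF _ n this] K show ?thesis by simp
qed



definition is_diag :: "real mat \<Rightarrow> nat \<Rightarrow> (nat \<Rightarrow> real) \<Rightarrow> bool" where
  "is_diag A n f \<longleftrightarrow> A \<in> carrier_mat n n \<and> (\<forall>i<n. \<forall>j<n. A $$ (i,j) = (if i = j then f i else 0))"

lemma kron_carrier: "A \<in> carrier_mat a b \<Longrightarrow> B \<in> carrier_mat c d \<Longrightarrow> kron A B \<in> carrier_mat (a*c) (b*d)"
  by (auto simp: kron_def)

lemma kron_index: "i < dim_row A * dim_row B \<Longrightarrow> j < dim_col A * dim_col B \<Longrightarrow>
  kron A B $$ (i,j) = A $$ (i div dim_row B, j div dim_col B) * B $$ (i mod dim_row B, j mod dim_col B)"
  by (simp add: kron_def)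

lemma hcat_carrier: "A \<in> carrier_mat r a \<Longrightarrow> B \<in> carrier_mat r b \<Longrightarrow> hcat A B \<in> carrier_mat r (a+b)"
  by (auto simp: hcat_def)

lemma is_diag_carrier: "is_diag A n f \<Longrightarrow> A \<in> carrier_mat n n" by (simp add: is_diag_def)

lemma is_diag_cong: "is_diag A n f \<Longrightarrow> n = m \<Longrightarrow> (\<And>i. i < n \<Longrightarrow> f i = g i) \<Longrightarrow> is_diag A m g"
  by (auto simp: is_diag_def)

lemma is_diag_kron:
  assumes A: "is_diag A a f" and B: "is_diag B b g"
  shows "is_diag (kron A B) (a*b) (\<lambda>i. f (i div b) * g (i mod b))"
  unfolding is_diag_def
proof (intro conjI allI impI)
  have Ac: "A \<in> carrier_mat a a" and Bc: "B \<in> carrier_mat b b" using A B by (auto simp: is_diag_def)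
  show "kron A B \<in> carrier_mat (a*b) (a*b)" using kron_carrier[OF Ac Bc] .
  fix i j assume i: "i < a*b" and j: "j < a*b"
  have b0: "b > 0" using i by (cases b) auto
  have id: "i div b < a" "j div b < a" using i j by (auto simp: less_mult_imp_div_less)
  have md: "i mod b < b" "j mod b < b" using b0 by auto
  have "kron A B $$ (i,j) = A $$ (i div b, j div b) * B $$ (i mod b, j mod b)"
    using kron_index[of i A B j] Ac Bc i j by simp
  also have "\<dots> = (if i div b = j div b then f (i div b) else 0) * (if i mod b = j mod b then g (i mod b) else 0)"
    using A B id md by (simp add: is_diag_def)
  also have "\<dots> = (if i = j then f (i div b) * g (i mod b) else 0)"
  proof -
    have "i div b = j div b \<and> i mod b = j mod b \<longleftrightarrow> i = j"
      by (metis div_mult_mod_eq)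
    thus ?thesis by auto
  qed
  finally show "kron A B $$ (i,j) = (if i = j then f (i div b) * g (i mod b) else 0)" .
qed

lemma is_diag_bdiag:
  assumes A: "is_diag A a f" and B: "is_diag B b g"
  shows "is_diag (bdiag A B) (a+b) (\<lambda>i. if i < a then f i else g (i - a))"
  using A B unfolding is_diag_def bdiag_def by auto

lemma is_diag_smult: "is_diag A n f \<Longrightarrow> is_diag (c \<cdot>\<^sub>m A) n (\<lambda>i. c * f i)"
  unfolding is_diag_def by auto

lemma is_diag_Im: "is_diag (Im n) n (\<lambda>_. 1)"
  unfolding is_diag_def Im_def by auto

definition itf :: "nat \<Rightarrow> nat \<Rightarrow> real" where
  "itf p i = (if i = 0 \<or> i = p - 1 then 1/2 else 1)"

lemma itf_bounds: "1/2 \<le> itf p i" "itf p i \<le> 1"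
  by (auto simp: itf_def)

lemma is_diag_Itil: "is_diag (Itil p) p (itf p)"
  unfolding is_diag_def Itil_def itf_def by auto

lemma is_diag_mult:
  assumes A: "is_diag A n f" and B: "is_diag B n g"
  shows "is_diag (A * B) n (\<lambda>i. f i * g i)"
  unfolding is_diag_def
proof (intro conjI allI impI)
  have Ac: "A \<in> carrier_mat n n" and Bc: "B \<in> carrier_mat n n" using A B by (auto simp: is_diag_def)
  show "A * B \<in> carrier_mat n n" using Ac Bc by simp
  fix i j assume i: "i < n" and j: "j < n"
  have "(A * B) $$ (i,j) = (\<Sum>k\<in>{0..<n}. A $$ (i,k) * B $$ (k,j))"
    using Ac Bc i j by (simp add: scalar_prod_def)
  also have "\<dots> = (\<Sum>k\<in>{0..<n}. if k = i then f i * B $$ (i,j) else 0)"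
    using A i by (intro sum.cong) (auto simp: is_diag_def)
  also have "\<dots> = f i * B $$ (i,j)" using i by simp
  also have "\<dots> = (if i = j then f i * g i else 0)" using B i j by (simp add: is_diag_def)
  finally show "(A * B) $$ (i,j) = (if i = j then f i * g i else 0)" .
qed

lemma is_diag_mult_vec:
  assumes A: "is_diag A n f" and x: "x \<in> carrier_vec n"
  shows "A *\<^sub>v x = vec n (\<lambda>i. f i * x $ i)"
proof (rule eq_vecI)
  have Ac: "A \<in> carrier_mat n n" using A by (simp add: is_diag_def)
  show "dim_vec (A *\<^sub>v x) = dim_vec (vec n (\<lambda>i. f i * x $ i))" using Ac by simp
  fix i assume "i < dim_vec (vec n (\<lambda>i. f i * x $ i))"
  hence i: "i < n" by simp
  have "(A *\<^sub>v x) $ i = (\<Sum>k\<in>{0..<n}. A $$ (i,k) * x $ k)"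
    using Ac x i by (simp add: scalar_prod_def)
  also have "\<dots> = (\<Sum>k\<in>{0..<n}. if k = i then f i * x $ i else 0)"
    using A i by (intro sum.cong) (auto simp: is_diag_def)
  also have "\<dots> = f i * x $ i" using i by simp
  finally show "(A *\<^sub>v x) $ i = vec n (\<lambda>i. f i * x $ i) $ i" using i by simp
qed

lemma is_diag_transpose: "is_diag A n f \<Longrightarrow> transpose_mat A = A"
  unfolding is_diag_def by (intro eq_matI) auto

lemma sp_self_real: "(x::real vec) \<in> carrier_vec n \<Longrightarrow> x \<bullet> x = (\<Sum>i<n. (x$i)^2)"
  by (auto simp: scalar_prod_def lessThan_atLeast0 power2_eq_square intro!: sum.cong)

lemma is_diag_quad:
  assumes A: "is_diag A n f" and x: "x \<in> carrier_vec n"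
  shows "x \<bullet> (A *\<^sub>v x) = (\<Sum>i<n. f i * (x$i)^2)"
  using x by (simp add: is_diag_mult_vec[OF A x] scalar_prod_def lessThan_atLeast0 power2_eq_square
      algebra_simps)

lemma is_diag_bil:
  assumes A: "is_diag A n f" and x: "x \<in> carrier_vec n" and y: "y \<in> carrier_vec n"
  shows "x \<bullet> (A *\<^sub>v y) = (\<Sum>i<n. f i * x$i * y$i)"
  using x y by (simp add: is_diag_mult_vec[OF A y] scalar_prod_def lessThan_atLeast0 algebra_simps)

lemma is_diag_DU: "is_diag (DU U nx ny nz) (Nn nx ny nz)
   (\<lambda>a. U (a mod (nx+1) + 1) (a div (nx+1) mod (ny+1) + 1) (a div ((nx+1)*(ny+1)) + 1))"
  unfolding is_diag_def DU_def by auto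

lemma is_diag_dis:
  assumes A: "is_diag A n f" and pos: "\<And>i. i < n \<Longrightarrow> f i > 0"
  shows "is_diag (diag_inv_sqrt A) n (\<lambda>i. 1 / sqrt (f i))"
  using A unfolding is_diag_def diag_inv_sqrt_def by auto



definition nnd :: "real mat \<Rightarrow> nat \<Rightarrow> bool" where
  "nnd A n \<longleftrightarrow> (\<exists>f. is_diag A n f \<and> (\<forall>i<n. 0 \<le> f i))"

lemma nnd_kron: "nnd A a \<Longrightarrow> nnd B b \<Longrightarrow> nnd (kron A B) (a*b)"
  unfolding nnd_def
proof (elim exE conjE)
  fix f g assume A: "is_diag A a f" "\<forall>i<a. 0 \<le> f i" and B: "is_diag B b g" "\<forall>i<b. 0 \<le> g i"
  show "\<exists>h. is_diag (kron A B) (a * b) h \<and> (\<forall>i<a * b. 0 \<le> h i)"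
  proof (intro exI conjI allI impI)
    show "is_diag (kron A B) (a * b) (\<lambda>i. f (i div b) * g (i mod b))" by (rule is_diag_kron[OF A(1) B(1)])
    fix i assume i: "i < a*b"
    hence b0: "b > 0" by (cases b) auto
    have "i div b < a" using i by (simp add: less_mult_imp_div_less)
    moreover have "i mod b < b" using b0 by simp
    ultimately show "0 \<le> f (i div b) * g (i mod b)" using A(2) B(2) by simp
  qed
qed

lemma nnd_bdiag: "nnd A a \<Longrightarrow> nnd B b \<Longrightarrow> nnd (bdiag A B) (a+b)"
  unfolding nnd_def
proof (elim exE conjE)
  fix f g assume A: "is_diag A a f" "\<forall>i<a. 0 \<le> f i" and B: "is_diag B b g" "\<forall>i<b. 0 \<le> g i"
  show "\<exists>h. is_diag (bdiag A B) (a + b) h \<and> (\<forall>i<a + b. 0 \<le> h i)"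
    by (rule exI[of _ "\<lambda>i. if i < a then f i else g (i - a)"], rule conjI, rule is_diag_bdiag[OF A(1) B(1)]) (use A(2) B(2) in simp)
qed

lemma nnd_smult: assumes "nnd A n" "c \<ge> 0" shows "nnd (c \<cdot>\<^sub>m A) n"
proof -
  obtain f where f: "is_diag A n f" "\<forall>i<n. 0 \<le> f i" using assms(1) unfolding nnd_def by blast
  show ?thesis unfolding nnd_def
    by (rule exI[of _ "\<lambda>i. c * f i"], rule conjI, rule is_diag_smult[OF f(1)]) (use f(2) assms(2) in simp)
qed

lemma nnd_mult: assumes "nnd A n" "nnd B n" shows "nnd (A * B) n"
proof -
  obtain f where f: "is_diag A n f" "\<forall>i<n. 0 \<le> f i" using assms(1) unfolding nnd_def by blast
  obtain g where g: "is_diag B n g" "\<forall>i<n. 0 \<le> g i" using assms(2) unfolding nnd_def by blast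
  show ?thesis unfolding nnd_def
    by (rule exI[of _ "\<lambda>i. f i * g i"], rule conjI, rule is_diag_mult[OF f(1) g(1)]) (use f(2) g(2) in simp)
qed

lemma nnd_Im: "nnd (Im n) n" unfolding nnd_def
  by (rule exI[of _ "\<lambda>_. 1"], rule conjI, rule is_diag_Im) simp

lemma nnd_Itil: "nnd (Itil n) n" unfolding nnd_def
proof (rule exI[of _ "itf n"], rule conjI, rule is_diag_Itil)
  show "\<forall>i<n. 0 \<le> itf n i" by (simp add: itf_def)
qed

lemma nnd_cong: "nnd A n \<Longrightarrow> n = m \<Longrightarrow> nnd A m" by simp

lemma nnd_quad: assumes "nnd A n" "x \<in> carrier_vec n" shows "0 \<le> x \<bullet> (A *\<^sub>v x)"
proof -
  obtain f where f: "is_diag A n f" "\<forall>i<n. 0 \<le> f i" using assms(1) unfolding nnd_def by blast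
  show ?thesis unfolding is_diag_quad[OF f(1) assms(2)] using f(2) by (intro sum_nonneg) simp
qed

lemma nnd_carrier: "nnd A n \<Longrightarrow> A \<in> carrier_mat n n" unfolding nnd_def using is_diag_carrier by blast
lemma nnd_transpose: "nnd A n \<Longrightarrow> transpose_mat A = A" unfolding nnd_def using is_diag_transpose by blast

lemma Wm_carrier: "Wm p \<in> carrier_mat p (p+1)" by (simp add: Wm_def)
lemma evec_carrier: "evec p q \<in> carrier_mat q 1" by (simp add: evec_def)
lemma Im_carrier: "Im p \<in> carrier_mat p p" by (simp add: Im_def)

abbreviation "Cn nx ny nz \<equiv> (nz+1)*((ny+1)*nx) + ((nz+1)*(ny*(nx+1)) + nz*((ny+1)*(nx+1)))"

lemma Nn_alt: "(nz+1)*((ny+1)*(nx+1)) = Nn nx ny nz" unfolding Nn_def by (simp only: ac_simps)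

lemma Dmat_carrier: "Dmat nx ny nz \<in> carrier_mat (Nn nx ny nz) (Cn nx ny nz)"
proof -
  have T: "transpose_mat (Wm p) \<in> carrier_mat (p+1) p" for p using Wm_carrier by auto
  have x: "Dx nx ny nz \<in> carrier_mat (Nn nx ny nz) ((nz+1)*((ny+1)*nx))"
    unfolding Dx_def Nn_alt[symmetric]
    by (intro uminus_carrier_mat kron_carrier Im_carrier T)
  have y: "Dy nx ny nz \<in> carrier_mat (Nn nx ny nz) ((nz+1)*(ny*(nx+1)))"
    unfolding Dy_def Nn_alt[symmetric]
    by (intro uminus_carrier_mat kron_carrier Im_carrier T)
  have z: "Dz nx ny nz \<in> carrier_mat (Nn nx ny nz) (nz*((ny+1)*(nx+1)))"
    unfolding Dz_def Nn_alt[symmetric]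
    by (intro uminus_carrier_mat kron_carrier Im_carrier T)
  show ?thesis unfolding Dmat_def by (intro hcat_carrier x y z)
qed

lemma DS_nnd: assumes "dx > 0" "dy > 0" "dz > 0"
  shows "nnd (DS dx dy dz nx ny nz) (Cn nx ny nz)"
  unfolding DS_def using assms
  by (intro nnd_bdiag nnd_smult nnd_kron nnd_Im nnd_Itil) auto

lemma Dlinv_nnd: assumes "dx > 0" "dy > 0" "dz > 0"
  shows "nnd (Dl_inv dx dy dz nx ny nz) (Cn nx ny nz)"
proof -
  have "nnd (Dl_inv dx dy dz nx ny nz) (nx*(ny+1)*(nz+1) + ((nx+1)*ny*(nz+1) + (nx+1)*(ny+1)*nz))"
    unfolding Dl_inv_def using assms
    by (intro nnd_bdiag nnd_smult nnd_kron nnd_Im nnd_Itil) auto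
  moreover have "nx*(ny+1)*(nz+1) + ((nx+1)*ny*(nz+1) + (nx+1)*(ny+1)*nz) = Cn nx ny nz"
    by (simp only: ac_simps)
  ultimately show ?thesis by (rule nnd_cong)
qed

lemma DV_diag: assumes "dx > 0" "dy > 0" "dz > 0"
  shows "\<exists>vf. is_diag (DV dx dy dz nx ny nz) (Nn nx ny nz) vf \<and>
     (\<forall>i. dx*dy*dz/8 \<le> vf i \<and> vf i \<le> dx*dy*dz)"
proof -
  define c where "c = dx*dy*dz"
  have c: "c > 0" using assms by (simp add: c_def)
  let ?f = "\<lambda>i. itf (nz+1) (i div ((ny+1)*(nx+1))) *
      (itf (ny+1) (i mod ((ny+1)*(nx+1)) div (nx+1)) * itf (nx+1) (i mod ((ny+1)*(nx+1)) mod (nx+1)))"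
  have "is_diag (DV dx dy dz nx ny nz) ((nz+1)*((ny+1)*(nx+1))) (\<lambda>i. c * ?f i)"
    unfolding DV_def c_def
    by (intro is_diag_smult is_diag_kron is_diag_Itil)
  hence d: "is_diag (DV dx dy dz nx ny nz) (Nn nx ny nz) (\<lambda>i. c * ?f i)"
    by (rule is_diag_cong) (simp_all only: Nn_def ac_simps)
  have b: "1/8 \<le> a1 * (a2 * a3) \<and> a1 * (a2 * a3) \<le> 1" if "1/2 \<le> a1" "a1 \<le> 1" "1/2 \<le> a2" "a2 \<le> 1"
    "1/2 \<le> a3" "a3 \<le> 1" for a1 a2 a3 :: real
  proof -
    have "1/4 \<le> a2 * a3" using mult_mono[of "1/2" a2 "1/2" a3] that by simp
    moreover have "a2 * a3 \<le> 1" using mult_mono[of a2 1 a3 1] that by simp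
    ultimately show ?thesis using mult_mono[of "1/2" a1 "1/4" "a2*a3"] mult_mono[of a1 1 "a2*a3" 1] that
      by simp
  qed
  have "\<forall>i. c/8 \<le> c * ?f i \<and> c * ?f i \<le> c"
  proof
    fix i
    have fb: "1/8 \<le> ?f i \<and> ?f i \<le> 1" by (rule b) (rule itf_bounds)+
    have "c * (1/8) \<le> c * ?f i" by (rule mult_left_mono) (use fb c in auto)
    moreover have "c * ?f i \<le> c * 1" by (rule mult_left_mono) (use fb c in auto)
    ultimately show "c/8 \<le> c * ?f i \<and> c * ?f i \<le> c" by simp
  qed
  hence "\<exists>vf. is_diag (DV dx dy dz nx ny nz) (Nn nx ny nz) vf \<and> (\<forall>i. c/8 \<le> vf i \<and> vf i \<le> c)"
    by (intro exI[of _ "\<lambda>i. c * ?f i"] conjI d)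
  thus ?thesis unfolding c_def .
qed



lemma smult_mat_vec: "x \<in> carrier_vec (dim_col A) \<Longrightarrow> ((c::real) \<cdot>\<^sub>m A) *\<^sub>v x = c \<cdot>\<^sub>v (A *\<^sub>v x)"
  by (intro eq_vecI) (auto simp: scalar_prod_def sum_distrib_left mult.assoc)

lemma transpose_smult: "transpose_mat ((c::real) \<cdot>\<^sub>m A) = c \<cdot>\<^sub>m transpose_mat A"
  by (intro eq_matI) auto

lemma Uset_finite: fixes U :: "nat \<Rightarrow> nat \<Rightarrow> nat \<Rightarrow> real" shows "finite {U i j k | i j k. i \<in> {1..nx+1} \<and> j \<in> {1..ny+1} \<and> k \<in> {1..nz+1}}"
proof -
  have "{U i j k | i j k. i \<in> {1..nx+1} \<and> j \<in> {1..ny+1} \<and> k \<in> {1..nz+1}}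
     \<subseteq> (\<lambda>(i,j,k). U i j k) ` ({1..nx+1} \<times> {1..ny+1} \<times> {1..nz+1})" by force
  thus ?thesis by (rule finite_subset) (auto intro!: finite_imageI finite_cartesian_product)
qed

lemma H_props:
  fixes hbar m dx dy dz :: real and U :: "nat \<Rightarrow> nat \<Rightarrow> nat \<Rightarrow> real"
  assumes hbar: "hbar > 0" and m: "m > 0" and dx: "dx > 0" and dy: "dy > 0" and dz: "dz > 0"
  shows "Hmat hbar m dx dy dz nx ny nz U \<in> carrier_mat (Nn nx ny nz) (Nn nx ny nz)"
    "transpose_mat (Hmat hbar m dx dy dz nx ny nz U) = Hmat hbar m dx dy dz nx ny nz U"
    "\<And>x::real vec. x \<in> carrier_vec (Nn nx ny nz) \<Longrightarrow>
      dx*dy*dz * min (Min {U i j k | i j k. i \<in> {1..nx+1} \<and> j \<in> {1..ny+1} \<and> k \<in> {1..nz+1}}) 0 * (x \<bullet> x)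
      \<le> x \<bullet> (Hmat hbar m dx dy dz nx ny nz U *\<^sub>v x)"
proof -
  define N where "N = Nn nx ny nz"
  define C where "C = Cn nx ny nz"
  define D where "D = Dmat nx ny nz"
  define S where "S = DS dx dy dz nx ny nz"
  define L where "L = Dl_inv dx dy dz nx ny nz"
  define SL where "SL = S * L"
  define DT where "DT = transpose_mat D"
  define V where "V = DV dx dy dz nx ny nz"
  define DUm where "DUm = DU U nx ny nz"
  define c where "c = hbar^2 / (2*m)"
  define M0 where "M0 = D * SL * DT"
  define mU where "mU = min (Min {U i j k | i j k. i \<in> {1..nx+1} \<and> j \<in> {1..ny+1} \<and> k \<in> {1..nz+1}}) 0"
  have Dc: "D \<in> carrier_mat N C" unfolding D_def N_def C_def by (rule Dmat_carrier)
  have DTc: "DT \<in> carrier_mat C N" using Dc by (simp add: DT_def)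
  have Sn: "nnd S C" unfolding S_def C_def by (rule DS_nnd[OF dx dy dz])
  have Ln: "nnd L C" unfolding L_def C_def by (rule Dlinv_nnd[OF dx dy dz])
  have SLn: "nnd SL C" unfolding SL_def by (rule nnd_mult[OF Sn Ln])
  have Sc: "S \<in> carrier_mat C C" and Lc: "L \<in> carrier_mat C C" and SLc: "SL \<in> carrier_mat C C"
    using nnd_carrier Sn Ln SLn by auto
  have SLt: "transpose_mat SL = SL" by (rule nnd_transpose[OF SLn])
  have H: "Hmat hbar m dx dy dz nx ny nz U = c \<cdot>\<^sub>m M0 + V * DUm"
  proof -
    have "D * S * L * DT = D * SL * DT" unfolding SL_def using Dc Sc Lc
      by (simp add: assoc_mult_mat[of D N C S C L C])
    thus ?thesis unfolding Hmat_def c_def M0_def V_def DUm_def D_def S_def L_def DT_def by simp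
  qed
  have M0c: "M0 \<in> carrier_mat N N" using Dc SLc DTc by (simp add: M0_def)
  have M0t: "transpose_mat M0 = M0"
  proof -
    have "transpose_mat M0 = transpose_mat DT * transpose_mat (D * SL)"
      unfolding M0_def by (rule transpose_mult[of _ N C]) (use Dc SLc DTc in auto)
    also have "transpose_mat (D * SL) = transpose_mat SL * transpose_mat D"
      by (rule transpose_mult[of _ N C]) (use Dc SLc in auto)
    finally show ?thesis unfolding SLt DT_def[symmetric] M0_def
      using Dc SLc DTc by (simp add: DT_def assoc_mult_mat[of D N C SL C DT N])
  qed
  obtain vf where vf: "is_diag V N vf" "\<And>i. dx*dy*dz/8 \<le> vf i \<and> vf i \<le> dx*dy*dz"
    using DV_diag[OF dx dy dz] unfolding V_def N_def by blast
  let ?uf = "\<lambda>a. U (a mod (nx+1) + 1) (a div (nx+1) mod (ny+1) + 1) (a div ((nx+1)*(ny+1)) + 1)"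
  have du: "is_diag DUm N ?uf" unfolding DUm_def N_def by (rule is_diag_DU)
  have VU: "is_diag (V * DUm) N (\<lambda>i. vf i * ?uf i)" by (rule is_diag_mult[OF vf(1) du])
  have VUc: "V * DUm \<in> carrier_mat N N" using is_diag_carrier[OF VU] .
  show Hc: "Hmat hbar m dx dy dz nx ny nz U \<in> carrier_mat (Nn nx ny nz) (Nn nx ny nz)"
    unfolding H N_def[symmetric] using M0c VUc by simp
  show "transpose_mat (Hmat hbar m dx dy dz nx ny nz U) = Hmat hbar m dx dy dz nx ny nz U"
    unfolding H using M0c VUc
    by (simp add: transpose_add[of _ N N] transpose_smult M0t is_diag_transpose[OF VU])
  fix x :: "real vec" assume x: "x \<in> carrier_vec (Nn nx ny nz)"
  hence xN: "x \<in> carrier_vec N" by (simp add: N_def)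
  have q1: "0 \<le> x \<bullet> (M0 *\<^sub>v x)"
  proof -
    have "M0 *\<^sub>v x = (D * SL) *\<^sub>v (DT *\<^sub>v x)" unfolding M0_def
      by (rule assoc_mult_mat_vec[of _ N C _ N]) (use Dc SLc DTc xN in auto)
    also have "\<dots> = D *\<^sub>v (SL *\<^sub>v (DT *\<^sub>v x))"
      by (rule assoc_mult_mat_vec[of _ N C _ C]) (use Dc SLc DTc xN in auto)
    finally have "M0 *\<^sub>v x = D *\<^sub>v (SL *\<^sub>v (DT *\<^sub>v x))" .
    hence "x \<bullet> (M0 *\<^sub>v x) = (DT *\<^sub>v x) \<bullet> (SL *\<^sub>v (DT *\<^sub>v x))"
      using transpose_vec_mult_scalar[OF Dc _ xN, of "SL *\<^sub>v (DT *\<^sub>v x)"] SLc DTc xN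
      by (simp add: DT_def)
    also have "\<dots> \<ge> 0" by (rule nnd_quad[OF SLn]) (use DTc xN in simp)
    finally show ?thesis .
  qed
  have c0: "c \<ge> 0" using m by (simp add: c_def)
  have fin: "finite {U i j k | i j k. i \<in> {1..nx+1} \<and> j \<in> {1..ny+1} \<and> k \<in> {1..nz+1}}"
    by (rule Uset_finite)
  have ufb: "mU \<le> ?uf a" if a: "a < N" for a
  proof -
    have "a < (nz+1)*((nx+1)*(ny+1))" using a unfolding N_def Nn_def by (metis mult.commute)
    hence "a div ((nx+1)*(ny+1)) < nz+1" by (rule less_mult_imp_div_less)
    hence "?uf a \<in> {U i j k | i j k. i \<in> {1..nx+1} \<and> j \<in> {1..ny+1} \<and> k \<in> {1..nz+1}}"
      by fastforce
    hence "Min {U i j k | i j k. i \<in> {1..nx+1} \<and> j \<in> {1..ny+1} \<and> k \<in> {1..nz+1}} \<le> ?uf a"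
      by (rule Min_le[OF fin])
    thus ?thesis unfolding mU_def by linarith
  qed
  have mU0: "mU \<le> 0" unfolding mU_def by simp
  have q2: "dx*dy*dz * mU * (x \<bullet> x) \<le> x \<bullet> ((V * DUm) *\<^sub>v x)"
  proof -
    have "dx*dy*dz * mU * (x \<bullet> x) = (\<Sum>i<N. dx*dy*dz * mU * (x$i)^2)"
      unfolding sp_self_real[OF xN] by (simp add: sum_distrib_left)
    also have "\<dots> \<le> (\<Sum>i<N. (vf i * ?uf i) * (x$i)^2)"
    proof (rule sum_mono)
      fix i assume "i \<in> {..<N}"
      hence i: "i < N" by simp
      have "dx*dy*dz * mU \<le> vf i * mU" using vf(2)[of i] mU0 by (simp add: mult_right_mono_neg)
      also have "\<dots> \<le> vf i * ?uf i" using ufb[OF i] vf(2)[of i] dx dy dz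
        by (intro mult_left_mono) (auto intro: order_trans[of 0 "dx*dy*dz/8"])
      finally show "dx*dy*dz * mU * (x$i)^2 \<le> (vf i * ?uf i) * (x$i)^2"
        by (rule mult_right_mono) simp
    qed
    also have "\<dots> = x \<bullet> ((V * DUm) *\<^sub>v x)" by (rule is_diag_quad[OF VU xN, symmetric])
    finally show ?thesis .
  qed
  have "x \<bullet> (Hmat hbar m dx dy dz nx ny nz U *\<^sub>v x) = c * (x \<bullet> (M0 *\<^sub>v x)) + x \<bullet> ((V * DUm) *\<^sub>v x)"
    unfolding H using M0c VUc xN
    by (simp add: add_mult_distrib_mat_vec[of _ N N] smult_mat_vec scalar_prod_add_distrib[of _ N])
  moreover have "0 \<le> c * (x \<bullet> (M0 *\<^sub>v x))" using c0 q1 by simp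
  ultimately show "dx*dy*dz * min (Min {U i j k | i j k. i \<in> {1..nx+1} \<and> j \<in> {1..ny+1} \<and> k \<in> {1..nz+1}}) 0 * (x \<bullet> x)
      \<le> x \<bullet> (Hmat hbar m dx dy dz nx ny nz U *\<^sub>v x)" using q2 unfolding mU_def by linarith
qed



lemma cs_sum:
  fixes a b :: "nat \<Rightarrow> real"
  assumes r: "r > 0"
  shows "2 * \<bar>\<Sum>i<n. a i * b i\<bar> \<le> r * (\<Sum>i<n. (a i)^2) + (1/r) * (\<Sum>i<n. (b i)^2)"
proof -
  have t: "2 * \<bar>a i * b i\<bar> \<le> r * (a i)^2 + (1/r) * (b i)^2" for i
  proof -
    have "0 \<le> (r * \<bar>a i\<bar> - \<bar>b i\<bar>)^2" by simp
    hence "2 * r * \<bar>a i\<bar> * \<bar>b i\<bar> \<le> r^2 * (a i)^2 + (b i)^2"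
      by (simp add: power2_eq_square algebra_simps)
    hence "(2 * \<bar>a i * b i\<bar>) * r \<le> (r * (a i)^2 + (1/r) * (b i)^2) * r"
      using r by (simp add: power2_eq_square algebra_simps abs_mult)
    thus ?thesis using r by (simp only: mult_le_cancel_right_pos)
  qed
  have "2 * \<bar>\<Sum>i<n. a i * b i\<bar> \<le> 2 * (\<Sum>i<n. \<bar>a i * b i\<bar>)" by (simp add: sum_abs)
  also have "\<dots> = (\<Sum>i<n. 2 * \<bar>a i * b i\<bar>)" by (simp add: sum_distrib_left)
  also have "\<dots> \<le> (\<Sum>i<n. r * (a i)^2 + (1/r) * (b i)^2)" by (rule sum_mono) (rule t)
  also have "\<dots> = r * (\<Sum>i<n. (a i)^2) + (1/r) * (\<Sum>i<n. (b i)^2)"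
    by (simp add: sum.distrib sum_distrib_left)
  finally show ?thesis .
qed

lemma P_pos:
  fixes hbar m dx dy dz dt :: real and U :: "nat \<Rightarrow> nat \<Rightarrow> nat \<Rightarrow> real"
  assumes hbar: "hbar > 0" and m: "m > 0" and dx: "dx > 0" and dy: "dy > 0" and dz: "dz > 0"
    and dt: "dt > 0" and cfl: "dt < dt_CFL hbar m dx dy dz nx ny nz U"
  shows "Pmat hbar m dt dx dy dz nx ny nz U \<in> carrier_mat (Nn nx ny nz + Nn nx ny nz) (Nn nx ny nz + Nn nx ny nz)"
    "lambda_min (Pmat hbar m dt dx dy dz nx ny nz U) > 0"
    "\<And>z. z \<in> carrier_vec (Nn nx ny nz + Nn nx ny nz) \<Longrightarrow>
       lambda_min (Pmat hbar m dt dx dy dz nx ny nz U) * (z \<bullet> z) \<le> z \<bullet> (Pmat hbar m dt dx dy dz nx ny nz U *\<^sub>v z)"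
proof -
  define N where "N = Nn nx ny nz"
  have N0: "N > 0" by (simp add: N_def Nn_def)
  define H where "H = Hmat hbar m dx dy dz nx ny nz U"
  define V where "V = DV dx dy dz nx ny nz"
  define P where "P = Pmat hbar m dt dx dy dz nx ny nz U"
  have Hc: "H \<in> carrier_mat N N" and Ht: "transpose_mat H = H"
    using H_props[OF hbar m dx dy dz] by (auto simp: H_def N_def)
  obtain vf where vf: "is_diag V N vf" "\<And>i. dx*dy*dz/8 \<le> vf i \<and> vf i \<le> dx*dy*dz"
    using DV_diag[OF dx dy dz] unfolding V_def N_def by blast
  define vlo where "vlo = dx*dy*dz/8"
  have vlo: "vlo > 0" using dx dy dz by (simp add: vlo_def)
  have vfp: "vf i > 0" for i using vf(2)[of i] vlo unfolding vlo_def by linarith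
  have vfne: "vf i \<noteq> 0" for i using vfp[of i] by simp
  have Vc: "V \<in> carrier_mat N N" using is_diag_carrier[OF vf(1)] .
  have Vt: "transpose_mat V = V" using is_diag_transpose[OF vf(1)] .
  define S where "S = diag_inv_sqrt V"
  have Sd: "is_diag S N (\<lambda>i. 1 / sqrt (vf i))" unfolding S_def by (rule is_diag_dis[OF vf(1) vfp])
  have Sc: "S \<in> carrier_mat N N" using is_diag_carrier[OF Sd] .
  have St: "transpose_mat S = S" using is_diag_transpose[OF Sd] .
  define K where "K = (1/hbar) \<cdot>\<^sub>m (S * H * S)"
  have Kc: "K \<in> carrier_mat N N" using Sc Hc by (simp add: K_def)
  have Kt: "transpose_mat K = K"
  proof -
    have "transpose_mat (S * H * S) = transpose_mat S * transpose_mat (S * H)"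
      by (rule transpose_mult[of _ N N]) (use Sc Hc in auto)
    also have "transpose_mat (S * H) = transpose_mat H * transpose_mat S"
      by (rule transpose_mult[of _ N N]) (use Sc Hc in auto)
    finally have "transpose_mat (S * H * S) = S * H * S"
      unfolding St Ht using Sc Hc by (simp add: assoc_mult_mat[of S N N H N S N])
    thus ?thesis unfolding K_def transpose_smult by simp
  qed
  define rho where "rho = spectral_radius (map_mat complex_of_real K)"
  have cfl': "dt_CFL hbar m dx dy dz nx ny nz U = 2 / rho"
    unfolding dt_CFL_def rho_def K_def S_def V_def H_def Let_def by simp
  obtain e where e: "eigenvalue K e" and eb: "\<And>x. x\<in>carrier_vec N \<Longrightarrow> (K *\<^sub>v x) \<bullet> (K *\<^sub>v x) \<le> e^2 * (x \<bullet> x)"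
    using sym_norm_bound[OF Kc N0 Kt] by blast
  have erho: "\<bar>e\<bar> \<le> rho" unfolding rho_def by (rule eig_le_sr[OF Kc N0 e])
  have rho0: "rho > 0"
  proof (rule ccontr)
    assume "\<not> rho > 0"
    hence "2 / rho \<le> 0" by (simp add: divide_nonpos_nonneg)
    thus False using cfl cfl' dt by linarith
  qed
  have dtrho: "dt * rho < 2" using cfl cfl' rho0 by (simp add: less_divide_eq)
  have Kb: "(K *\<^sub>v x) \<bullet> (K *\<^sub>v x) \<le> rho^2 * (x \<bullet> x)" if x: "x \<in> carrier_vec N" for x
  proof -
    have "e^2 \<le> rho^2" using erho by (metis abs_ge_zero power2_abs power_mono)
    hence "e^2 * (x \<bullet> x) \<le> rho^2 * (x \<bullet> x)" using sp_self_nonneg[OF x] by (rule mult_right_mono)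
    thus ?thesis using eb[OF x] by linarith
  qed
  have quadV: "vlo * (u \<bullet> u) \<le> u \<bullet> (V *\<^sub>v u)" if u: "u \<in> carrier_vec N" for u
  proof -
    have "vlo * (u \<bullet> u) = (\<Sum>i<N. vlo * (u$i)^2)" unfolding sp_self_real[OF u] by (simp add: sum_distrib_left)
    also have "\<dots> \<le> (\<Sum>i<N. vf i * (u$i)^2)"
      by (intro sum_mono mult_right_mono) (use vf(2) in \<open>auto simp: vlo_def\<close>)
    also have "\<dots> = u \<bullet> (V *\<^sub>v u)" by (rule is_diag_quad[OF vf(1) u, symmetric])
    finally show ?thesis .
  qed
  have bil: "2 * \<bar>u \<bullet> (H *\<^sub>v w)\<bar> \<le> hbar * rho * (u \<bullet> (V *\<^sub>v u) + w \<bullet> (V *\<^sub>v w))"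
    if u: "u \<in> carrier_vec N" and w: "w \<in> carrier_vec N" for u w
  proof -
    define p where "p = vec N (\<lambda>i. sqrt (vf i) * u$i)"
    define q where "q = vec N (\<lambda>i. sqrt (vf i) * w$i)"
    have pc: "p \<in> carrier_vec N" and qc: "q \<in> carrier_vec N" by (auto simp: p_def q_def)
    have Sp: "S *\<^sub>v p = u" unfolding is_diag_mult_vec[OF Sd pc]
      using u vfne by (intro eq_vecI) (auto simp: p_def)
    have Sq: "S *\<^sub>v q = w" unfolding is_diag_mult_vec[OF Sd qc]
      using w vfne by (intro eq_vecI) (auto simp: q_def)
    have pp: "p \<bullet> p = u \<bullet> (V *\<^sub>v u)"
      unfolding sp_self_real[OF pc] is_diag_quad[OF vf(1) u] using vfp
      by (intro sum.cong) (auto simp: p_def power_mult_distrib less_imp_le)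
    have qq: "q \<bullet> q = w \<bullet> (V *\<^sub>v w)"
      unfolding sp_self_real[OF qc] is_diag_quad[OF vf(1) w] using vfp
      by (intro sum.cong) (auto simp: q_def power_mult_distrib less_imp_le)
    define y where "y = K *\<^sub>v q"
    have yc: "y \<in> carrier_vec N" using Kc qc by (simp add: y_def)
    have Ky: "S *\<^sub>v (H *\<^sub>v (S *\<^sub>v q)) = hbar \<cdot>\<^sub>v y"
    proof -
      have "K *\<^sub>v q = (1/hbar) \<cdot>\<^sub>v ((S * H * S) *\<^sub>v q)" unfolding K_def
        by (rule smult_mat_vec) (use Sc Hc qc in simp)
      also have "(S * H * S) *\<^sub>v q = (S * H) *\<^sub>v (S *\<^sub>v q)"
        by (rule assoc_mult_mat_vec[of _ N N _ N]) (use Sc Hc qc in auto)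
      also have "\<dots> = S *\<^sub>v (H *\<^sub>v (S *\<^sub>v q))"
        by (rule assoc_mult_mat_vec[of _ N N _ N]) (use Sc Hc qc in auto)
      finally have "y = (1/hbar) \<cdot>\<^sub>v (S *\<^sub>v (H *\<^sub>v (S *\<^sub>v q)))" by (simp add: y_def)
      hence "hbar \<cdot>\<^sub>v y = S *\<^sub>v (H *\<^sub>v (S *\<^sub>v q))" using hbar by (simp add: smult_smult_assoc)
      thus ?thesis by simp
    qed
    have "u \<bullet> (H *\<^sub>v w) = (transpose_mat S *\<^sub>v p) \<bullet> (H *\<^sub>v (S *\<^sub>v q))" using St Sp Sq by simp
    also have "\<dots> = p \<bullet> (S *\<^sub>v (H *\<^sub>v (S *\<^sub>v q)))"
      by (rule transpose_vec_mult_scalar[OF Sc _ pc]) (use Hc Sc qc in simp)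
    also have "\<dots> = hbar * (p \<bullet> y)" unfolding Ky using pc yc by simp
    finally have uHw: "u \<bullet> (H *\<^sub>v w) = hbar * (p \<bullet> y)" .
    have "2 * \<bar>p \<bullet> y\<bar> \<le> rho * (p \<bullet> p) + (1/rho) * (y \<bullet> y)"
      using cs_sum[OF rho0, of "\<lambda>i. p$i" "\<lambda>i. y$i" N] pc yc
      unfolding sp_self_real[OF pc] sp_self_real[OF yc]
      by (simp add: scalar_prod_def lessThan_atLeast0)
    also have "(1/rho) * (y \<bullet> y) \<le> (1/rho) * (rho^2 * (q \<bullet> q))"
      using Kb[OF qc] rho0 unfolding y_def by (intro mult_left_mono) auto
    also have "(1/rho) * (rho^2 * (q \<bullet> q)) = rho * (q \<bullet> q)" using rho0 by (simp add: power2_eq_square)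
    finally have "2 * \<bar>p \<bullet> y\<bar> \<le> rho * (p \<bullet> p + q \<bullet> q)" by (simp add: algebra_simps)
    hence "hbar * (2 * \<bar>p \<bullet> y\<bar>) \<le> hbar * (rho * (p \<bullet> p + q \<bullet> q))" using hbar by simp
    thus ?thesis unfolding uHw pp qq using hbar by (simp add: abs_mult algebra_simps)
  qed
  define Kb where "Kb = (- dt / (2*hbar)) \<cdot>\<^sub>m H"
  have Kbc: "Kb \<in> carrier_mat N N" using Hc by (simp add: Kb_def)
  have Kbt: "transpose_mat Kb = Kb" unfolding Kb_def transpose_smult Ht ..
  have Pdef: "P = four_block_mat V Kb Kb V" unfolding P_def Pmat_def Let_def V_def Kb_def H_def ..
  have Pc: "P \<in> carrier_mat (N+N) (N+N)" unfolding Pdef using Vc by simp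
  have Pt: "transpose_mat P = P" unfolding Pdef
    by (subst transpose_four_block_mat[OF Vc Kbc Kbc Vc]) (simp add: Vt Kbt)
  define c0 where "c0 = (1 - dt*rho/2) * vlo"
  have c0: "c0 > 0" unfolding c0_def using dtrho vlo by simp
  have Pq: "c0 * (z \<bullet> z) \<le> z \<bullet> (P *\<^sub>v z)" if z: "z \<in> carrier_vec (N+N)" for z
  proof -
    define u where "u = vec_first z N"
    define w where "w = vec_last z N"
    have uc: "u \<in> carrier_vec N" and wc: "w \<in> carrier_vec N" by (auto simp: u_def w_def)
    have zuw: "z = u @\<^sub>v w" unfolding u_def w_def using z by simp
    have "P *\<^sub>v z = (V *\<^sub>v u + Kb *\<^sub>v w) @\<^sub>v (Kb *\<^sub>v u + V *\<^sub>v w)"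
      unfolding Pdef zuw by (rule four_block_mat_mult_vec[OF Vc Kbc Kbc Vc uc wc])
    note Pz = this
    have "z \<bullet> (P *\<^sub>v z) = u \<bullet> (V *\<^sub>v u + Kb *\<^sub>v w) + w \<bullet> (Kb *\<^sub>v u + V *\<^sub>v w)"
      apply (subst Pz, subst zuw)
      by (rule scalar_prod_append[OF uc wc]) (use Vc Kbc uc wc in auto)
    also have "\<dots> = u \<bullet> (V *\<^sub>v u) + w \<bullet> (V *\<^sub>v w) + (u \<bullet> (Kb *\<^sub>v w) + w \<bullet> (Kb *\<^sub>v u))"
      using Vc Kbc uc wc by (simp add: scalar_prod_add_distrib[of _ N])
    also have "u \<bullet> (Kb *\<^sub>v w) + w \<bullet> (Kb *\<^sub>v u) = - (dt/hbar) * (u \<bullet> (H *\<^sub>v w))"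
    proof -
      have "u \<bullet> (Kb *\<^sub>v w) = (- dt / (2*hbar)) * (u \<bullet> (H *\<^sub>v w))"
        unfolding Kb_def using Hc uc wc by (simp add: smult_mat_vec)
      moreover have "w \<bullet> (Kb *\<^sub>v u) = (- dt / (2*hbar)) * (u \<bullet> (H *\<^sub>v w))"
        unfolding Kb_def using Hc uc wc sym_sp[OF Hc Ht wc uc] by (simp add: smult_mat_vec)
      ultimately show ?thesis by (simp add: field_simps)
    qed
    finally have zPz: "z \<bullet> (P *\<^sub>v z) = u \<bullet> (V *\<^sub>v u) + w \<bullet> (V *\<^sub>v w) - (dt/hbar) * (u \<bullet> (H *\<^sub>v w))"
      by simp
    have "(dt/hbar) * (u \<bullet> (H *\<^sub>v w)) \<le> (dt/hbar) * \<bar>u \<bullet> (H *\<^sub>v w)\<bar>"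
      using dt hbar by (intro mult_left_mono) auto
    also have "\<dots> \<le> (dt/hbar) * (hbar * rho * (u \<bullet> (V *\<^sub>v u) + w \<bullet> (V *\<^sub>v w)) / 2)"
      using bil[OF uc wc] dt hbar by (intro mult_left_mono) auto
    also have "\<dots> = (dt * rho / 2) * (u \<bullet> (V *\<^sub>v u) + w \<bullet> (V *\<^sub>v w))" using hbar by simp
    finally have f1: "(1 - dt*rho/2) * (u \<bullet> (V *\<^sub>v u) + w \<bullet> (V *\<^sub>v w)) \<le> z \<bullet> (P *\<^sub>v z)"
      unfolding zPz by (simp add: algebra_simps)
    have f2: "(1 - dt*rho/2) * (vlo * (u \<bullet> u + w \<bullet> w)) \<le> (1 - dt*rho/2) * (u \<bullet> (V *\<^sub>v u) + w \<bullet> (V *\<^sub>v w))"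
      using quadV[OF uc] quadV[OF wc] dtrho by (intro mult_left_mono) (auto simp: distrib_left)
    have "z \<bullet> z = u \<bullet> u + w \<bullet> w" unfolding zuw by (rule scalar_prod_append[OF uc wc uc wc])
    hence "c0 * (z \<bullet> z) = (1 - dt*rho/2) * (vlo * (u \<bullet> u + w \<bullet> w))" unfolding c0_def by simp
    thus ?thesis using f1 f2 by linarith
  qed
  have N2: "N + N > 0" using N0 by simp
  note lm = lambda_min_prop[OF Pc N2 Pt]
  show "P \<in> carrier_mat (N+N) (N+N)" by (rule Pc)
  show "\<And>z. z \<in> carrier_vec (Nn nx ny nz + Nn nx ny nz) \<Longrightarrow>
       lambda_min (Pmat hbar m dt dx dy dz nx ny nz U) * (z \<bullet> z) \<le> z \<bullet> (Pmat hbar m dt dx dy dz nx ny nz U *\<^sub>v z)"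
    using lm(2) unfolding P_def N_def by blast
  obtain v where v: "eigenvector P v (lambda_min P)" using lm(1) unfolding eigenvalue_def by blast
  hence vc: "v \<in> carrier_vec (N+N)" and v0: "v \<noteq> 0\<^sub>v (N+N)" and Pv: "P *\<^sub>v v = lambda_min P \<cdot>\<^sub>v v"
    using Pc unfolding eigenvector_def by auto
  have "c0 * (v \<bullet> v) \<le> v \<bullet> (P *\<^sub>v v)" by (rule Pq[OF vc])
  also have "\<dots> = lambda_min P * (v \<bullet> v)" using vc by (simp add: Pv)
  finally have "c0 \<le> lambda_min P" using sp_self_pos[OF vc v0] by simp
  thus "lambda_min P > 0" using c0 by simp
qed



lemma mv_add_gen: "dim_vec x = dim_vec y \<Longrightarrow> (A::real mat) *\<^sub>v (x + y) = A *\<^sub>v x + A *\<^sub>v y"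
  by (intro eq_vecI) (auto simp: scalar_prod_def sum.distrib distrib_left)

lemma mv_smult_gen: "(A::real mat) *\<^sub>v (c \<cdot>\<^sub>v x) = c \<cdot>\<^sub>v (A *\<^sub>v x)"
  by (intro eq_vecI) (auto simp: scalar_prod_def sum_distrib_left mult.left_commute)

lemma energy_identity:
  fixes H V Hp :: "real mat" and r0 r1 r2 i1 i2 i3 gR1 gR2 gI0 gI1 :: "real vec" and hbar dt :: real
  assumes Hc: "H \<in> carrier_mat N N" and Ht: "transpose_mat H = H"
    and Vc: "V \<in> carrier_mat N N" and Vt: "transpose_mat V = V"
    and Hpr: "dim_row Hp = N"
    and v: "r0 \<in> carrier_vec N" "r1 \<in> carrier_vec N" "r2 \<in> carrier_vec N"
      "i1 \<in> carrier_vec N" "i2 \<in> carrier_vec N" "i3 \<in> carrier_vec N"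
    and g: "dim_vec gR1 = dim_vec gR2" "dim_vec gI0 = dim_vec gI1"
    and dt: "dt \<noteq> 0"
    and ea: "hbar \<cdot>\<^sub>m V *\<^sub>v ((1/dt) \<cdot>\<^sub>v (r1 - r0)) = H *\<^sub>v i1 - Hp *\<^sub>v gI0"
    and eb: "hbar \<cdot>\<^sub>m V *\<^sub>v ((1/dt) \<cdot>\<^sub>v (r2 - r1)) = H *\<^sub>v i2 - Hp *\<^sub>v gI1"
    and ec: "hbar \<cdot>\<^sub>m V *\<^sub>v ((1/dt) \<cdot>\<^sub>v (i2 - i1)) = - (H *\<^sub>v r1) + Hp *\<^sub>v gR1"
    and ed: "hbar \<cdot>\<^sub>m V *\<^sub>v ((1/dt) \<cdot>\<^sub>v (i3 - i2)) = - (H *\<^sub>v r2) + Hp *\<^sub>v gR2"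
  shows "((r2 \<bullet> (H *\<^sub>v r2) + i2 \<bullet> (H *\<^sub>v i2)
           + dt * (((1/dt) \<cdot>\<^sub>v (r2 - r1)) \<bullet> ((hbar \<cdot>\<^sub>m V) *\<^sub>v ((1/dt) \<cdot>\<^sub>v (i3 - i2)))))
        - (r1 \<bullet> (H *\<^sub>v r1) + i1 \<bullet> (H *\<^sub>v i1)
           + dt * (((1/dt) \<cdot>\<^sub>v (r1 - r0)) \<bullet> ((hbar \<cdot>\<^sub>m V) *\<^sub>v ((1/dt) \<cdot>\<^sub>v (i2 - i1)))))) / dt
     = 2 * (((1/dt) \<cdot>\<^sub>v (r2 - r1)) \<bullet> (Hp *\<^sub>v ((1/2) \<cdot>\<^sub>v (gR2 + gR1))))
     + 2 * (((1/dt) \<cdot>\<^sub>v (i2 - i1)) \<bullet> (Hp *\<^sub>v ((1/2) \<cdot>\<^sub>v (gI1 + gI0))))"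
proof -
  define A where "A = hbar \<cdot>\<^sub>m V *\<^sub>v ((1/dt) \<cdot>\<^sub>v (r1 - r0))"
  define B where "B = hbar \<cdot>\<^sub>m V *\<^sub>v ((1/dt) \<cdot>\<^sub>v (r2 - r1))"
  define X where "X = hbar \<cdot>\<^sub>m V *\<^sub>v ((1/dt) \<cdot>\<^sub>v (i2 - i1))"
  define Y where "Y = hbar \<cdot>\<^sub>m V *\<^sub>v ((1/dt) \<cdot>\<^sub>v (i3 - i2))"
  have Vhc0: "hbar \<cdot>\<^sub>m V \<in> carrier_mat N N" using Vc by simp
  have Ac: "A \<in> carrier_vec N" "B \<in> carrier_vec N" "X \<in> carrier_vec N" "Y \<in> carrier_vec N"
  proof -
    have dv: "(1/dt) \<cdot>\<^sub>v (x - y) \<in> carrier_vec N" if "x \<in> carrier_vec N" "y \<in> carrier_vec N" for x y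
      using that by simp
    show "A \<in> carrier_vec N" unfolding A_def by (rule mult_mat_vec_carrier[OF Vhc0 dv[OF v(2) v(1)]])
    show "B \<in> carrier_vec N" unfolding B_def by (rule mult_mat_vec_carrier[OF Vhc0 dv[OF v(3) v(2)]])
    show "X \<in> carrier_vec N" unfolding X_def by (rule mult_mat_vec_carrier[OF Vhc0 dv[OF v(5) v(4)]])
    show "Y \<in> carrier_vec N" unfolding Y_def by (rule mult_mat_vec_carrier[OF Vhc0 dv[OF v(6) v(5)]])
  qed
  have hp: "Hp *\<^sub>v g \<in> carrier_vec N" for g by (rule carrier_vecI) (simp add: Hpr)
  have gR: "Hp *\<^sub>v ((1/2) \<cdot>\<^sub>v (gR2 + gR1)) = (1/2) \<cdot>\<^sub>v (Hp *\<^sub>v gR2 + Hp *\<^sub>v gR1)"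
    using g by (simp add: mv_smult_gen mv_add_gen)
  have gI: "Hp *\<^sub>v ((1/2) \<cdot>\<^sub>v (gI1 + gI0)) = (1/2) \<cdot>\<^sub>v (Hp *\<^sub>v gI1 + Hp *\<^sub>v gI0)"
    using g by (simp add: mv_smult_gen mv_add_gen)
  have sR2: "Hp *\<^sub>v gR2 = Y + H *\<^sub>v r2"
  proof (rule eq_vecI)
    fix i assume "i < dim_vec (Y + H *\<^sub>v r2)"
    hence i: "i < N" using Ac Hc v by simp
    have "Y = - (H *\<^sub>v r2) + Hp *\<^sub>v gR2" using ed unfolding Y_def .
    hence "(Y) $ i = (- (H *\<^sub>v r2) + Hp *\<^sub>v gR2) $ i" by simp
    thus "(Hp *\<^sub>v gR2) $ i = (Y + H *\<^sub>v r2) $ i" using i Hc Hpr v Ac by simp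
  qed (use Ac Hpr Hc in simp)
  have sR1: "Hp *\<^sub>v gR1 = X + H *\<^sub>v r1"
  proof (rule eq_vecI)
    fix i assume "i < dim_vec (X + H *\<^sub>v r1)"
    hence i: "i < N" using Ac Hc v by simp
    have "X = - (H *\<^sub>v r1) + Hp *\<^sub>v gR1" using ec unfolding X_def .
    hence "(X) $ i = (- (H *\<^sub>v r1) + Hp *\<^sub>v gR1) $ i" by simp
    thus "(Hp *\<^sub>v gR1) $ i = (X + H *\<^sub>v r1) $ i" using i Hc Hpr v Ac by simp
  qed (use Ac Hpr Hc in simp)
  have sI1: "Hp *\<^sub>v gI1 = H *\<^sub>v i2 - B"
  proof (rule eq_vecI)
    fix i assume "i < dim_vec (H *\<^sub>v i2 - B)"
    hence i: "i < N" using Ac Hc v by simp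
    have "B = H *\<^sub>v i2 - Hp *\<^sub>v gI1" using eb unfolding B_def .
    hence "(B) $ i = (H *\<^sub>v i2 - Hp *\<^sub>v gI1) $ i" by simp
    thus "(Hp *\<^sub>v gI1) $ i = (H *\<^sub>v i2 - B) $ i" using i Hc Hpr v Ac by simp
  qed (use Ac Hpr Hc in simp)
  have sI0: "Hp *\<^sub>v gI0 = H *\<^sub>v i1 - A"
  proof (rule eq_vecI)
    fix i assume "i < dim_vec (H *\<^sub>v i1 - A)"
    hence i: "i < N" using Ac Hc v by simp
    have "A = H *\<^sub>v i1 - Hp *\<^sub>v gI0" using ea unfolding A_def .
    hence "(A) $ i = (H *\<^sub>v i1 - Hp *\<^sub>v gI0) $ i" by simp
    thus "(Hp *\<^sub>v gI0) $ i = (H *\<^sub>v i1 - A) $ i" using i Hc Hpr v Ac by simp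
  qed (use Ac Hpr Hc in simp)
  have symH: "x \<bullet> (H *\<^sub>v y) = y \<bullet> (H *\<^sub>v x)" if "x \<in> carrier_vec N" "y \<in> carrier_vec N" for x y
    by (rule sym_sp[OF Hc Ht that])
  define d2 where "d2 = r2 - r1"
  define d1 where "d1 = r1 - r0"
  define e where "e = i2 - i1"
  have dc: "d2 \<in> carrier_vec N" "d1 \<in> carrier_vec N" "e \<in> carrier_vec N"
    using v by (auto simp: d2_def d1_def e_def)
  have Hv: "H *\<^sub>v x \<in> carrier_vec N" if "x \<in> carrier_vec N" for x using Hc that by simp
  have Vhc: "hbar \<cdot>\<^sub>m V \<in> carrier_mat N N" using Vc by simp
  have Vht: "transpose_mat (hbar \<cdot>\<^sub>m V) = hbar \<cdot>\<^sub>m V" using Vt by (simp add: transpose_smult)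
  have Vhsm: "(hbar \<cdot>\<^sub>m V) *\<^sub>v (c \<cdot>\<^sub>v x) = c \<cdot>\<^sub>v ((hbar \<cdot>\<^sub>m V) *\<^sub>v x)" if "x \<in> carrier_vec N" for c x
    by (rule mult_mat_vec[OF Vhc that])
  have L2: "dt * (((1/dt) \<cdot>\<^sub>v d2) \<bullet> Y) = d2 \<bullet> Y"
    using dc Ac dt by (simp add: smult_scalar_prod_distrib[of _ N])
  have L1: "dt * (((1/dt) \<cdot>\<^sub>v d1) \<bullet> X) = d1 \<bullet> X"
    using dc Ac dt by (simp add: smult_scalar_prod_distrib[of _ N])
  have R1: "2 * (((1/dt) \<cdot>\<^sub>v d2) \<bullet> ((1/2) \<cdot>\<^sub>v ((Y + H *\<^sub>v r2) + (X + H *\<^sub>v r1))))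
      = (1/dt) * (d2 \<bullet> Y + (d2 \<bullet> (H *\<^sub>v r2) + d2 \<bullet> (H *\<^sub>v r1)) + d2 \<bullet> X)"
  proof -
    have c1: "(Y + H *\<^sub>v r2) + (X + H *\<^sub>v r1) \<in> carrier_vec N" using Ac Hv v by auto
    have "2 * (((1/dt) \<cdot>\<^sub>v d2) \<bullet> ((1/2) \<cdot>\<^sub>v ((Y + H *\<^sub>v r2) + (X + H *\<^sub>v r1))))
        = (1/dt) * (d2 \<bullet> ((Y + H *\<^sub>v r2) + (X + H *\<^sub>v r1)))"
      using dc c1 by (simp add: smult_scalar_prod_distrib[of _ N] scalar_prod_smult_distrib[of _ N])
    also have "d2 \<bullet> ((Y + H *\<^sub>v r2) + (X + H *\<^sub>v r1)) = d2 \<bullet> Y + (d2 \<bullet> (H *\<^sub>v r2) + d2 \<bullet> (H *\<^sub>v r1)) + d2 \<bullet> X"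
      using dc Ac Hv v by (simp add: scalar_prod_add_distrib[of _ N])
    finally show ?thesis .
  qed
  have R2: "2 * (((1/dt) \<cdot>\<^sub>v e) \<bullet> ((1/2) \<cdot>\<^sub>v ((H *\<^sub>v i2 - B) + (H *\<^sub>v i1 - A))))
      = (1/dt) * ((e \<bullet> (H *\<^sub>v i2) + e \<bullet> (H *\<^sub>v i1)) - (e \<bullet> A + e \<bullet> B))"
  proof -
    have c1: "(H *\<^sub>v i2 - B) + (H *\<^sub>v i1 - A) \<in> carrier_vec N" using Ac Hv v by auto
    have "2 * (((1/dt) \<cdot>\<^sub>v e) \<bullet> ((1/2) \<cdot>\<^sub>v ((H *\<^sub>v i2 - B) + (H *\<^sub>v i1 - A))))
        = (1/dt) * (e \<bullet> ((H *\<^sub>v i2 - B) + (H *\<^sub>v i1 - A)))"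
      using dc c1 by (simp add: smult_scalar_prod_distrib[of _ N] scalar_prod_smult_distrib[of _ N])
    also have "e \<bullet> ((H *\<^sub>v i2 - B) + (H *\<^sub>v i1 - A)) = (e \<bullet> (H *\<^sub>v i2) + e \<bullet> (H *\<^sub>v i1)) - (e \<bullet> A + e \<bullet> B)"
      using dc Ac Hv v by (simp add: scalar_prod_add_distrib[of _ N] scalar_prod_minus_distrib[of _ N])
    finally show ?thesis .
  qed
  have symq: "(x - y) \<bullet> (H *\<^sub>v x) + (x - y) \<bullet> (H *\<^sub>v y) = x \<bullet> (H *\<^sub>v x) - y \<bullet> (H *\<^sub>v y)"
    if x: "x \<in> carrier_vec N" and y: "y \<in> carrier_vec N" for x y
  proof -
    have "(x - y) \<bullet> (H *\<^sub>v x) + (x - y) \<bullet> (H *\<^sub>v y)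
        = x \<bullet> (H *\<^sub>v x) - y \<bullet> (H *\<^sub>v x) + (x \<bullet> (H *\<^sub>v y) - y \<bullet> (H *\<^sub>v y))"
      using x y Hv by (simp add: minus_scalar_prod_distrib[of _ N])
    thus ?thesis using symH[OF x y] by simp
  qed
  have H2: "d2 \<bullet> (H *\<^sub>v r2) + d2 \<bullet> (H *\<^sub>v r1) = r2 \<bullet> (H *\<^sub>v r2) - r1 \<bullet> (H *\<^sub>v r1)"
    unfolding d2_def by (rule symq) (use v in auto)
  have H1: "e \<bullet> (H *\<^sub>v i2) + e \<bullet> (H *\<^sub>v i1) = i2 \<bullet> (H *\<^sub>v i2) - i1 \<bullet> (H *\<^sub>v i1)"
    unfolding e_def by (rule symq) (use v in auto)
  have XAB: "d2 \<bullet> X + d1 \<bullet> X = e \<bullet> A + e \<bullet> B"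
  proof -
    have "d2 \<bullet> X + d1 \<bullet> X = (d2 + d1) \<bullet> X" using dc Ac by (simp add: add_scalar_prod_distrib[of _ N])
    also have "d2 + d1 = r2 - r0" unfolding d2_def d1_def using v by (intro eq_vecI) auto
    also have "(r2 - r0) \<bullet> X = (1/dt) * ((r2 - r0) \<bullet> ((hbar \<cdot>\<^sub>m V) *\<^sub>v e))"
      unfolding X_def e_def[symmetric] using dc v Vhc by (simp add: Vhsm scalar_prod_smult_distrib[of _ N])
    also have "(r2 - r0) \<bullet> ((hbar \<cdot>\<^sub>m V) *\<^sub>v e) = e \<bullet> ((hbar \<cdot>\<^sub>m V) *\<^sub>v (r2 - r0))"
      by (rule sym_sp[OF Vhc Vht]) (use dc v in auto)
    also have "r2 - r0 = d1 + d2" unfolding d2_def d1_def using v by (intro eq_vecI) auto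
    also have "(1/dt) * (e \<bullet> ((hbar \<cdot>\<^sub>m V) *\<^sub>v (d1 + d2))) = e \<bullet> A + e \<bullet> B"
      unfolding A_def B_def d1_def[symmetric] d2_def[symmetric]
      using dc Vhc by (simp add: Vhsm mult_add_distrib_mat_vec[OF Vhc] scalar_prod_add_distrib[of _ N]
          scalar_prod_smult_distrib[of _ N] algebra_simps)
    finally show ?thesis .
  qed
  have XAB': "d1 \<bullet> X / dt + d2 \<bullet> X / dt = e \<bullet> A / dt + e \<bullet> B / dt"
    using XAB by (metis add.commute add_divide_distrib)
  have lhs: "((r2 \<bullet> (H *\<^sub>v r2) + i2 \<bullet> (H *\<^sub>v i2)
           + dt * (((1/dt) \<cdot>\<^sub>v (r2 - r1)) \<bullet> ((hbar \<cdot>\<^sub>m V) *\<^sub>v ((1/dt) \<cdot>\<^sub>v (i3 - i2)))))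
        - (r1 \<bullet> (H *\<^sub>v r1) + i1 \<bullet> (H *\<^sub>v i1)
           + dt * (((1/dt) \<cdot>\<^sub>v (r1 - r0)) \<bullet> ((hbar \<cdot>\<^sub>m V) *\<^sub>v ((1/dt) \<cdot>\<^sub>v (i2 - i1))))))
      = (r2 \<bullet> (H *\<^sub>v r2) + i2 \<bullet> (H *\<^sub>v i2) + d2 \<bullet> Y) - (r1 \<bullet> (H *\<^sub>v r1) + i1 \<bullet> (H *\<^sub>v i1) + d1 \<bullet> X)"
    using L1 L2 unfolding d1_def d2_def X_def Y_def by simp
  have rhs: "2 * (((1/dt) \<cdot>\<^sub>v (r2 - r1)) \<bullet> (Hp *\<^sub>v ((1/2) \<cdot>\<^sub>v (gR2 + gR1))))
     + 2 * (((1/dt) \<cdot>\<^sub>v (i2 - i1)) \<bullet> (Hp *\<^sub>v ((1/2) \<cdot>\<^sub>v (gI1 + gI0))))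
     = (1/dt) * ((r2 \<bullet> (H *\<^sub>v r2) + i2 \<bullet> (H *\<^sub>v i2) + d2 \<bullet> Y) - (r1 \<bullet> (H *\<^sub>v r1) + i1 \<bullet> (H *\<^sub>v i1) + d1 \<bullet> X))"
    unfolding gR gI sR1 sR2 sI1 sI0 d2_def[symmetric] e_def[symmetric] R1 R2 H1 H2
    using XAB' by (simp add: algebra_simps)
  show ?thesis unfolding lhs rhs by (simp add: divide_inverse mult.commute)
qed



lemma cross_bound:
  fixes V :: "real mat" and r0 r1 i1 i2 :: "real vec"
  assumes Vd: "is_diag V N vf" and vfb: "\<And>i. 0 \<le> vf i \<and> vf i \<le> c"
    and hbar: "hbar > 0" and dt: "dt > 0"
    and v: "r0 \<in> carrier_vec N" "r1 \<in> carrier_vec N" "i1 \<in> carrier_vec N" "i2 \<in> carrier_vec N"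
  shows "- (hbar/dt) * c * (r1 \<bullet> r1 + r0 \<bullet> r0 + i2 \<bullet> i2 + i1 \<bullet> i1)
     \<le> dt * (((1/dt) \<cdot>\<^sub>v (r1 - r0)) \<bullet> ((hbar \<cdot>\<^sub>m V) *\<^sub>v ((1/dt) \<cdot>\<^sub>v (i2 - i1))))"
proof -
  define a where "a = r1 - r0"
  define b where "b = i2 - i1"
  have ac: "(1/dt) \<cdot>\<^sub>v a \<in> carrier_vec N" and bc: "(1/dt) \<cdot>\<^sub>v b \<in> carrier_vec N"
    using v by (auto simp: a_def b_def)
  have Vhd: "is_diag (hbar \<cdot>\<^sub>m V) N (\<lambda>i. hbar * vf i)" by (rule is_diag_smult[OF Vd])
  have "dt * (((1/dt) \<cdot>\<^sub>v a) \<bullet> ((hbar \<cdot>\<^sub>m V) *\<^sub>v ((1/dt) \<cdot>\<^sub>v b)))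
      = dt * (\<Sum>i<N. hbar * vf i * ((1/dt) \<cdot>\<^sub>v a) $ i * ((1/dt) \<cdot>\<^sub>v b) $ i)"
    unfolding is_diag_bil[OF Vhd ac bc] ..
  also have "\<dots> = (\<Sum>i<N. (hbar/dt) * (vf i * a$i * b$i))"
    unfolding sum_distrib_left
  proof (rule sum.cong)
    fix i assume "i \<in> {..<N}"
    hence i: "i < N" by simp
    have "a$i = r1$i - r0$i" "b$i = i2$i - i1$i" using i v by (auto simp: a_def b_def)
    show "dt * (hbar * vf i * ((1/dt) \<cdot>\<^sub>v a) $ i * ((1/dt) \<cdot>\<^sub>v b) $ i) = (hbar/dt) * (vf i * a$i * b$i)"
      using i v dt by (simp add: a_def b_def field_simps power2_eq_square)
  qed simp
  also have "\<dots> \<ge> (\<Sum>i<N. - (hbar/dt) * c * ((r1$i)^2 + (r0$i)^2 + (i2$i)^2 + (i1$i)^2))"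
  proof (rule sum_mono)
    fix i assume "i \<in> {..<N}"
    hence i: "i < N" by simp
    have ai: "a$i = r1$i - r0$i" and bi: "b$i = i2$i - i1$i" using i v by (auto simp: a_def b_def)
    define S where "S = (r1$i)^2 + (r0$i)^2 + (i2$i)^2 + (i1$i)^2"
    have S0: "S \<ge> 0" unfolding S_def by simp
    have absab: "2 * \<bar>a$i * b$i\<bar> \<le> (a$i)^2 + (b$i)^2"
    proof -
      have "0 \<le> (\<bar>a$i\<bar> - \<bar>b$i\<bar>)^2" by simp
      thus ?thesis by (simp add: power2_eq_square algebra_simps abs_mult)
    qed
    have a2: "(a$i)^2 \<le> 2 * (r1$i)^2 + 2 * (r0$i)^2"
    proof -
      have "0 \<le> (r1$i + r0$i)^2" by simp
      thus ?thesis unfolding ai by (simp add: power2_eq_square algebra_simps)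
    qed
    have b2: "(b$i)^2 \<le> 2 * (i2$i)^2 + 2 * (i1$i)^2"
    proof -
      have "0 \<le> (i2$i + i1$i)^2" by simp
      thus ?thesis unfolding bi by (simp add: power2_eq_square algebra_simps)
    qed
    have ab: "\<bar>a$i * b$i\<bar> \<le> S" using absab a2 b2 unfolding S_def by linarith
    have "- (vf i * a$i * b$i) \<le> vf i * \<bar>a$i * b$i\<bar>"
      using vfb[of i] by (metis abs_ge_minus_self abs_mult abs_of_nonneg mult.assoc)
    also have "\<dots> \<le> c * S" using vfb[of i] ab S0 by (intro mult_mono) auto
    finally have "- (c * S) \<le> vf i * a$i * b$i" by linarith
    hence "(hbar/dt) * (- (c * S)) \<le> (hbar/dt) * (vf i * a$i * b$i)"
      using hbar dt by (intro mult_left_mono) auto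
    thus "- (hbar/dt) * c * S \<le> (hbar/dt) * (vf i * a$i * b$i)" by simp
  qed
  also have "(\<Sum>i<N. - (hbar/dt) * c * ((r1$i)^2 + (r0$i)^2 + (i2$i)^2 + (i1$i)^2))
      = - (hbar/dt) * c * (r1 \<bullet> r1 + r0 \<bullet> r0 + i2 \<bullet> i2 + i1 \<bullet> i1)"
    unfolding sp_self_real[OF v(1)] sp_self_real[OF v(2)] sp_self_real[OF v(3)] sp_self_real[OF v(4)]
    by (simp only: sum_distrib_left[symmetric] sum.distrib)
  finally show ?thesis unfolding a_def b_def by simp
qed



theorem theorem3:
  fixes hbar m dx dy dz dt Pmax :: real
    and nx ny nz nt :: nat
    and U :: "nat \<Rightarrow> nat \<Rightarrow> nat \<Rightarrow> real"
    and psiR psiI gR gI :: "nat \<Rightarrow> real vec"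
  assumes "hbar > 0" "m > 0" "dx > 0" "dy > 0" "dz > 0"
    and "nx > 0" "ny > 0" "nz > 0" "nt > 0"
    and "dt > 0" "dt < dt_CFL hbar m dx dy dz nx ny nz U"
    and "fdtdq_scheme hbar m dt dx dy dz nx ny nz nt U psiR psiI gR gI"
    and "\<forall>n\<le>nt. total_prob hbar m dt dx dy dz nx ny nz U psiR psiI n \<le> Pmax"
  shows "(\<forall>n. 1 \<le> n \<and> n \<le> nt - 1 \<longrightarrow>
            total_energy hbar m dt dx dy dz nx ny nz U psiR psiI n
            \<ge> dx*dy*dz * (Pmax / lambda_min (Pmat hbar m dt dx dy dz nx ny nz U))
               * (min (Min {U i j k | i j k. i \<in> {1..nx+1} \<and> j \<in> {1..ny+1} \<and> k \<in> {1..nz+1}}) 0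
                  - 4*hbar/dt))
       \<and> (\<forall>n. 1 \<le> n \<and> n \<le> nt - 2 \<longrightarrow>
            (total_energy hbar m dt dx dy dz nx ny nz U psiR psiI (Suc n)
             - total_energy hbar m dt dx dy dz nx ny nz U psiR psiI n) / dt
            = supplied_power hbar m dt dx dy dz nx ny nz psiR psiI gR gI n)"
proof -
  note pos = assms(1-5)
  have hbar: "hbar > 0" and m: "m > 0" and dx: "dx > 0" and dy: "dy > 0" and dz: "dz > 0"
    and dt: "dt > 0" using assms by auto
  define N where "N = Nn nx ny nz"
  define H where "H = Hmat hbar m dx dy dz nx ny nz U"
  define V where "V = DV dx dy dz nx ny nz"
  define Hp where "Hp = Hperp hbar m dx dy dz nx ny nz"
  define M where "M = Mm nx ny nz"
  have sch: "\<forall>n\<le>nt. psiR n \<in> carrier_vec N \<and> psiI n \<in> carrier_vec N"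
    "\<forall>n<nt. gR n \<in> carrier_vec M \<and> gI n \<in> carrier_vec M"
    "\<forall>n<nt. hbar \<cdot>\<^sub>m V *\<^sub>v ((1/dt) \<cdot>\<^sub>v (psiR (Suc n) - psiR n)) = H *\<^sub>v psiI (Suc n) - Hp *\<^sub>v gI n \<and>
         hbar \<cdot>\<^sub>m V *\<^sub>v ((1/dt) \<cdot>\<^sub>v (psiI (Suc n) - psiI n)) = - (H *\<^sub>v psiR n) + Hp *\<^sub>v gR n"
    using assms(12) unfolding fdtdq_scheme_def Let_def N_def H_def V_def Hp_def M_def by auto
  have Hc: "H \<in> carrier_mat N N" and Ht: "transpose_mat H = H"
    and Hq: "\<And>x. x \<in> carrier_vec N \<Longrightarrow>
      dx*dy*dz * min (Min {U i j k | i j k. i \<in> {1..nx+1} \<and> j \<in> {1..ny+1} \<and> k \<in> {1..nz+1}}) 0 * (x \<bullet> x)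
      \<le> x \<bullet> (H *\<^sub>v x)"
    using H_props[OF hbar m dx dy dz] unfolding H_def N_def by auto
  obtain vf where vf: "is_diag V N vf" "\<And>i. dx*dy*dz/8 \<le> vf i \<and> vf i \<le> dx*dy*dz"
    using DV_diag[OF dx dy dz] unfolding V_def N_def by blast
  have Vc: "V \<in> carrier_mat N N" using is_diag_carrier[OF vf(1)] .
  have Vt: "transpose_mat V = V" using is_diag_transpose[OF vf(1)] .
  have Hpr: "dim_row Hp = N"
    by (simp add: Hp_def Hperp_def Lmat_def hcat_def kron_def Im_def evec_def N_def Nn_def)
  show ?thesis
  proof (intro conjI allI impI)
    fix n assume n: "1 \<le> n \<and> n \<le> nt - 2"
    then obtain k where k: "n = Suc k" by (cases n) auto
    have k3: "Suc (Suc k) < nt" using n k by auto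
    have vs: "psiR k \<in> carrier_vec N" "psiR (Suc k) \<in> carrier_vec N" "psiR (Suc (Suc k)) \<in> carrier_vec N"
      "psiI (Suc k) \<in> carrier_vec N" "psiI (Suc (Suc k)) \<in> carrier_vec N" "psiI (Suc (Suc (Suc k))) \<in> carrier_vec N"
      using sch(1) k3 by auto
    have gs: "dim_vec (gR (Suc k)) = dim_vec (gR (Suc (Suc k)))" "dim_vec (gI k) = dim_vec (gI (Suc k))"
      using sch(2) k3 by (metis Suc_lessD carrier_vecD)+
    have e1: "hbar \<cdot>\<^sub>m V *\<^sub>v ((1/dt) \<cdot>\<^sub>v (psiR (Suc k) - psiR k)) = H *\<^sub>v psiI (Suc k) - Hp *\<^sub>v gI k"
      using sch(3) k3 by auto
    have e2: "hbar \<cdot>\<^sub>m V *\<^sub>v ((1/dt) \<cdot>\<^sub>v (psiR (Suc (Suc k)) - psiR (Suc k))) = H *\<^sub>v psiI (Suc (Suc k)) - Hp *\<^sub>v gI (Suc k)"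
      using sch(3) k3 by auto
    have e3: "hbar \<cdot>\<^sub>m V *\<^sub>v ((1/dt) \<cdot>\<^sub>v (psiI (Suc (Suc k)) - psiI (Suc k))) = - (H *\<^sub>v psiR (Suc k)) + Hp *\<^sub>v gR (Suc k)"
      using sch(3) k3 by auto
    have e4: "hbar \<cdot>\<^sub>m V *\<^sub>v ((1/dt) \<cdot>\<^sub>v (psiI (Suc (Suc (Suc k))) - psiI (Suc (Suc k)))) = - (H *\<^sub>v psiR (Suc (Suc k))) + Hp *\<^sub>v gR (Suc (Suc k))"
      using sch(3) k3 by auto
    note EI = energy_identity[OF Hc Ht Vc Vt Hpr vs gs _ e1 e2 e3 e4]
    show "(total_energy hbar m dt dx dy dz nx ny nz U psiR psiI (Suc n)
             - total_energy hbar m dt dx dy dz nx ny nz U psiR psiI n) / dt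
            = supplied_power hbar m dt dx dy dz nx ny nz psiR psiI gR gI n"
      unfolding total_energy_def supplied_power_def Let_def k H_def[symmetric] V_def[symmetric] Hp_def[symmetric]
      using EI dt by simp
  next
    fix n assume n: "1 \<le> n \<and> n \<le> nt - 1"
    show "total_energy hbar m dt dx dy dz nx ny nz U psiR psiI n
            \<ge> dx*dy*dz * (Pmax / lambda_min (Pmat hbar m dt dx dy dz nx ny nz U))
               * (min (Min {U i j k | i j k. i \<in> {1..nx+1} \<and> j \<in> {1..ny+1} \<and> k \<in> {1..nz+1}}) 0
                  - 4*hbar/dt)"
    proof -
      obtain k where k: "n = Suc k" using n by (cases n) auto
      have k2: "Suc (Suc k) \<le> nt" using n k by auto
      define P where "P = Pmat hbar m dt dx dy dz nx ny nz U"
      define lam where "lam = lambda_min P"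
      define Mx where "Mx = Pmax / lam"
      define mU where "mU = min (Min {U i j k | i j k. i \<in> {1..nx+1} \<and> j \<in> {1..ny+1} \<and> k \<in> {1..nz+1}}) 0"
      note PP = P_pos[OF hbar m dx dy dz dt assms(11)]
      have lam: "lam > 0" using PP(2) unfolding lam_def P_def .
      have Pq: "lam * (z \<bullet> z) \<le> z \<bullet> (P *\<^sub>v z)" if "z \<in> carrier_vec (N+N)" for z
        using PP(3) that unfolding lam_def P_def N_def by blast
      have bnd: "psiR j \<bullet> psiR j + psiI j \<bullet> psiI j \<le> Mx" if j: "j \<le> nt" for j
      proof -
        have Rc: "psiR j \<in> carrier_vec N" and Ic: "psiI j \<in> carrier_vec N" using sch(1) j by auto
        define z where "z = psiR j @\<^sub>v psiI j"
        have zc: "z \<in> carrier_vec (N+N)" using Rc Ic by (simp add: z_def)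
        have zz: "z \<bullet> z = psiR j \<bullet> psiR j + psiI j \<bullet> psiI j"
          unfolding z_def by (rule scalar_prod_append[OF Rc Ic Rc Ic])
        have "lam * (z \<bullet> z) \<le> z \<bullet> (P *\<^sub>v z)" by (rule Pq[OF zc])
        also have "\<dots> = total_prob hbar m dt dx dy dz nx ny nz U psiR psiI j"
          unfolding total_prob_def Let_def z_def P_def ..
        also have "\<dots> \<le> Pmax" using assms(13) j by blast
        finally have "lam * (z \<bullet> z) \<le> Pmax" .
        hence "z \<bullet> z \<le> Pmax / lam" using lam by (simp add: pos_le_divide_eq mult.commute)
        thus ?thesis using zz Mx_def by simp
      qed
      have nn: "0 \<le> x \<bullet> x" if "x \<in> carrier_vec N" for x :: "real vec" using sp_self_nonneg[OF that] .
      have c0: "psiR 0 \<in> carrier_vec N" "psiI 0 \<in> carrier_vec N" using sch(1) by auto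
      have Mx0: "0 \<le> Mx" using bnd[of 0] nn[OF c0(1)] nn[OF c0(2)] by simp
      have vR: "psiR k \<in> carrier_vec N" "psiR (Suc k) \<in> carrier_vec N" "psiR (Suc (Suc k)) \<in> carrier_vec N"
        and vI: "psiI k \<in> carrier_vec N" "psiI (Suc k) \<in> carrier_vec N" "psiI (Suc (Suc k)) \<in> carrier_vec N"
        using sch(1) k2 by auto
      have b1: "psiR (Suc k) \<bullet> psiR (Suc k) + psiI (Suc k) \<bullet> psiI (Suc k) \<le> Mx" using bnd k2 by simp
      have b0: "psiR k \<bullet> psiR k \<le> Mx" using bnd[of k] k2 nn[OF vI(1)] by simp
      have b2: "psiI (Suc (Suc k)) \<bullet> psiI (Suc (Suc k)) \<le> Mx" using bnd[of "Suc (Suc k)"] k2 nn[OF vR(3)] by simp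
      have vfb: "0 \<le> vf i \<and> vf i \<le> dx*dy*dz" for i using vf(2)[of i] dx dy dz
        by (metis divide_nonneg_pos le_less_trans less_eq_real_def mult_pos_pos zero_less_numeral)
      have cross: "- (hbar/dt) * (dx*dy*dz) * (psiR (Suc k) \<bullet> psiR (Suc k) + psiR k \<bullet> psiR k
           + psiI (Suc (Suc k)) \<bullet> psiI (Suc (Suc k)) + psiI (Suc k) \<bullet> psiI (Suc k))
         \<le> dt * (((1/dt) \<cdot>\<^sub>v (psiR (Suc k) - psiR k)) \<bullet> ((hbar \<cdot>\<^sub>m V) *\<^sub>v ((1/dt) \<cdot>\<^sub>v (psiI (Suc (Suc k)) - psiI (Suc k)))))"
        by (rule cross_bound[OF vf(1) vfb hbar dt vR(1) vR(2) vI(2) vI(3)])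
      have E: "total_energy hbar m dt dx dy dz nx ny nz U psiR psiI n
         = psiR (Suc k) \<bullet> (H *\<^sub>v psiR (Suc k)) + psiI (Suc k) \<bullet> (H *\<^sub>v psiI (Suc k))
           + dt * (((1/dt) \<cdot>\<^sub>v (psiR (Suc k) - psiR k)) \<bullet> ((hbar \<cdot>\<^sub>m V) *\<^sub>v ((1/dt) \<cdot>\<^sub>v (psiI (Suc (Suc k)) - psiI (Suc k)))))"
        unfolding total_energy_def Let_def k H_def V_def by simp
      have q1: "dx*dy*dz * mU * (psiR (Suc k) \<bullet> psiR (Suc k)) \<le> psiR (Suc k) \<bullet> (H *\<^sub>v psiR (Suc k))"
        using Hq[OF vR(2)] unfolding mU_def .
      have q2: "dx*dy*dz * mU * (psiI (Suc k) \<bullet> psiI (Suc k)) \<le> psiI (Suc k) \<bullet> (H *\<^sub>v psiI (Suc k))"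
        using Hq[OF vI(2)] unfolding mU_def .
      have mU0: "mU \<le> 0" unfolding mU_def by simp
      have dpos: "dx*dy*dz > 0" using dx dy dz by simp
      have f1: "dx*dy*dz * mU * Mx \<le> dx*dy*dz * mU * (psiR (Suc k) \<bullet> psiR (Suc k) + psiI (Suc k) \<bullet> psiI (Suc k))"
        using b1 mU0 dpos by (intro mult_left_mono_neg) (auto simp: mult_nonneg_nonpos)
      have f2: "(hbar/dt) * (dx*dy*dz) * (psiR (Suc k) \<bullet> psiR (Suc k) + psiR k \<bullet> psiR k
           + psiI (Suc (Suc k)) \<bullet> psiI (Suc (Suc k)) + psiI (Suc k) \<bullet> psiI (Suc k)) \<le> (hbar/dt) * (dx*dy*dz) * (4 * Mx)"
        using b0 b1 b2 Mx0 hbar dt dpos by (intro mult_left_mono) auto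
      have rhs: "dx*dy*dz * (Pmax / lambda_min (Pmat hbar m dt dx dy dz nx ny nz U)) * (mU - 4*hbar/dt)
          = dx*dy*dz * mU * Mx - (hbar/dt) * (dx*dy*dz) * (4 * Mx)"
      proof -
        have "Pmax / lambda_min (Pmat hbar m dt dx dy dz nx ny nz U) = Mx" unfolding Mx_def lam_def P_def ..
        thus ?thesis using dt by (simp add: field_simps)
      qed
      show ?thesis unfolding E mU_def[symmetric] rhs using f1 f2 q1 q2 cross
        by (simp add: algebra_simps)
    qed
  qed
qed

end
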